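(* Let $\rho>0$, $\theta\ge0$, let $\mathfrak{L}\in C^2[A,\infty)$ with $\lim_{u\to\infty}\mathfrak L(u)=\infty$ and $\mathfrak L'\in NRV_{-1}$, let $\boldsymbol L_f$ be a normalised slowly varying function, and let $\mathfrak K\in NRV_\theta(0+)$ (nondecreasing near $0$ if $\theta=0$). Then there is $\beta>0$ such that $\Phi:(0,\beta)\to\mathbb{R}$ is well defined by \[\int_{\Phi(t)}^\infty \frac{[\mathfrak{L}'(y)]^{1/2}}{y^{\frac{\rho+1}{2}}[\boldsymbol{L}_f(y)]^{1/2}}\,dy=\int_0^t\mathfrak{K}(s)\,ds,\qquad t\in(0,\beta),\] and $\Phi\in C^2(0,\beta)$, $\lim_{t\to0^+}\Phi(t)=\infty$, $\Phi\in NRV_{-2(\theta+1)/\rho}(0+)$. Moreover, for every integer $m\ge1$, \[\lim_{t\to0^+}\frac{\log_m\Phi(t)}{\log_m(1/t)}=\begin{cases}\frac{2(1+\theta)}{\rho},& m=1,\\1,&m\ge2,\end{cases}\] and \[\lim_{t\to0^+}\frac{\Phi(t)\Phi''(t)}{[\Phi'(t)]^2}=1+\frac{\rho}{2(\theta+1)},\qquad \lim_{t\to0^+}\frac{\mathfrak L(\Phi(t))}{\mathfrak L'(\Phi(t))}\cdot\frac{\Phi(t)}{[\Phi'(t)]^2}=0.\]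
   Context: $\log_m$ is the $m$-fold iterate of $\log$. A normalised slowly varying function is a positive $C^1$ function $\widehat L$ on some $[B,\infty)$ with $\lim_{u\to\infty}u\widehat L'(u)/\widehat L(u)=0$. $R\in NRV_\rho$ means $R(u)=u^\rho\widehat L(u)$ for a normalised slowly varying $\widehat L$. $\mathfrak K\in NRV_\theta(0+)$ (resp. $\Phi\in NRV_\gamma(0+)$) means $u\mapsto\mathfrak K(1/u)\in NRV_{-\theta}$ (resp. $u\mapsto\Phi(1/u)\in NRV_{-\gamma}$). *)

theory Defs
  imports "HOL-Analysis.Analysis"
begin

definition logm :: "nat \<Rightarrow> real \<Rightarrow> real" where
  "logm m = (ln ^^ m)"

definition nsv :: "(real \<Rightarrow> real) \<Rightarrow> real \<Rightarrow> bool" where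
  "nsv L B \<longleftrightarrow>
     (\<forall>u\<ge>B. L u > 0) \<and>
     (\<exists>L'. (\<forall>u\<ge>B. (L has_real_derivative L' u) (at u within {B..})) \<and>
           continuous_on {B..} L' \<and>
           ((\<lambda>u. u * L' u / L u) \<longlongrightarrow> 0) at_top)"

definition NRV :: "real \<Rightarrow> (real \<Rightarrow> real) \<Rightarrow> bool" where
  "NRV \<rho> R \<longleftrightarrow> (\<exists>Lh B. B > 0 \<and> nsv Lh B \<and> (\<forall>u\<ge>B. R u = u powr \<rho> * Lh u))"

definition NRV0 :: "real \<Rightarrow> (real \<Rightarrow> real) \<Rightarrow> bool" where
  "NRV0 \<gamma> K \<longleftrightarrow> NRV (-\<gamma>) (\<lambda>u. K (1 / u))"

end

theory Submission
  imports Defs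
begin
lemma lhopital_at_top_0:
  fixes f g f' g' :: "real \<Rightarrow> real"
  assumes f0: "(f \<longlongrightarrow> 0) at_top" and g0: "(g \<longlongrightarrow> 0) at_top"
    and gnz: "eventually (\<lambda>x. g x \<noteq> 0) at_top"
    and g'nz: "eventually (\<lambda>x. g' x \<noteq> 0) at_top"
    and Df: "eventually (\<lambda>x. DERIV f x :> f' x) at_top"
    and Dg: "eventually (\<lambda>x. DERIV g x :> g' x) at_top"
    and lim: "((\<lambda> x. (f' x / g' x)) \<longlongrightarrow> y) at_top"
  shows "((\<lambda> x. f x / g x) \<longlongrightarrow> y) at_top"
  unfolding filterlim_at_top_to_right
proof (rule lhopital_right_0)
  let ?F = "\<lambda>x. f (inverse x)"
  let ?G = "\<lambda>x. g (inverse x)"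
  let ?R = "at_right (0::real)"
  let ?D = "\<lambda>f' x. f' (inverse x) * - (inverse x ^ Suc (Suc 0))"
  show "(?F \<longlongrightarrow> 0) ?R" using f0 unfolding filterlim_at_top_to_right .
  show "(?G \<longlongrightarrow> 0) ?R" using g0 unfolding filterlim_at_top_to_right .
  show "eventually (\<lambda>x. ?G x \<noteq> 0) ?R" using gnz unfolding eventually_at_right_to_top by simp
  show "eventually (\<lambda>x. DERIV ?G x  :> ?D g' x) ?R"
    unfolding eventually_at_right_to_top
    using Dg eventually_ge_at_top[where c=1]
    by eventually_elim (rule derivative_eq_intros DERIV_chain'[where f=inverse] | simp)+
  show "eventually (\<lambda>x. DERIV ?F x  :> ?D f' x) ?R"
    unfolding eventually_at_right_to_top
    using Df eventually_ge_at_top[where c=1]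
    by eventually_elim (rule derivative_eq_intros DERIV_chain'[where f=inverse] | simp)+
  show "eventually (\<lambda>x. ?D g' x \<noteq> 0) ?R"
    unfolding eventually_at_right_to_top
    using g'nz eventually_ge_at_top[where c=1]
    by eventually_elim auto
  show "((\<lambda>x. ?D f' x / ?D g' x) \<longlongrightarrow> y) ?R"
    unfolding filterlim_at_right_to_top
    apply (intro filterlim_cong[THEN iffD2, OF refl refl _ lim])
    using eventually_ge_at_top[where c=1]
    by eventually_elim simp
qed

lemma log_ratio_limit:
  fixes f f' :: "real \<Rightarrow> real"
  assumes pos: "eventually (\<lambda>x. f x > 0) at_top"
    and Df: "eventually (\<lambda>x. DERIV f x :> f' x) at_top"
    and lim: "((\<lambda>x. x * f' x / f x) \<longlongrightarrow> c) at_top"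
  shows "((\<lambda>x. ln (f x) / ln x) \<longlongrightarrow> c) at_top"
proof (rule lhospital_at_top_at_top[where g' = "\<lambda>x. 1 / x" and f' = "\<lambda>x. f' x / f x"])
  show "LIM x at_top. ln (x::real) :> at_top" by (rule ln_at_top)
  show "\<forall>\<^sub>F x in at_top. 1 / (x::real) \<noteq> 0" using eventually_gt_at_top[of 0] by eventually_elim auto
  show "\<forall>\<^sub>F x in at_top. (ln has_real_derivative 1 / x) (at (x::real))"
    using eventually_gt_at_top[of 0] by eventually_elim (auto intro!: derivative_eq_intros)
  show "\<forall>\<^sub>F x in at_top. ((\<lambda>x. ln (f x)) has_real_derivative f' x / f x) (at x)"
    using pos Df by eventually_elim (auto intro!: derivative_eq_intros simp: field_simps)
  show "((\<lambda>x. f' x / f x / (1 / x)) \<longlongrightarrow> c) at_top"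
    using lim by (simp add: field_simps)
qed

lemma log_ratio_upper:
  fixes f :: "real \<Rightarrow> real"
  assumes pos: "eventually (\<lambda>x. f x > 0) at_top"
    and lim: "((\<lambda>x. ln (f x) / ln x) \<longlongrightarrow> c) at_top" and e: "e > 0"
  shows "eventually (\<lambda>x. f x \<le> x powr (c + e) \<and> x powr (c - e) \<le> f x) at_top"
proof -
  have "eventually (\<lambda>x. ln (f x) / ln x < c + e) at_top"
    using lim e by (intro order_tendstoD) auto
  moreover have "eventually (\<lambda>x. ln (f x) / ln x > c - e) at_top"
    using lim e by (intro order_tendstoD) auto
  ultimately show ?thesis using pos eventually_gt_at_top[of 1]
  proof eventually_elim
    case (elim x)
    have lx: "ln x > 0" using elim by simp
    have x0: "x > 0" using elim by simp
    have "ln (f x) < (c + e) * ln x" using elim(1) lx by (simp add: field_simps)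
    hence "exp (ln (f x)) \<le> exp ((c + e) * ln x)" by simp
    hence 1: "f x \<le> x powr (c + e)" using elim x0 by (simp add: powr_def)
    have "ln (f x) > (c - e) * ln x" using elim(2) lx by (simp add: field_simps)
    hence "exp ((c - e) * ln x) \<le> exp (ln (f x))" by simp
    hence 2: "x powr (c - e) \<le> f x" using elim x0 by (simp add: powr_def)
    show ?case using 1 2 by simp
  qed
qed

lemma split_tail:
  fixes g :: "real \<Rightarrow> real"
  assumes "z \<le> b" "g integrable_on {z..b}" "g integrable_on {b..}"
  shows "integral {z..} g = integral {z..b} g + integral {b..} g"
proof -
  have "(g has_integral (integral {z..b} g + integral {b..} g)) ({z..b} \<union> {b..})"
    apply (rule has_integral_Un)
    using assms by (auto simp: integrable_integral)
  moreover have "{z..b} \<union> {b..} = {z..}" using assms by auto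
  ultimately show ?thesis by (metis integral_unique)
qed

lemma tail_integral:
  fixes g g' :: "real \<Rightarrow> real" and Y \<sigma> :: real
  assumes \<sigma>: "\<sigma> > 0" and Y: "Y > 0"
   and gpos: "\<forall>y\<ge>Y. g y > 0"
   and gd: "\<forall>y\<ge>Y. DERIV g y :> g' y"
   and glim: "((\<lambda>y. y * g' y / g y) \<longlongrightarrow> -1-\<sigma>) at_top"
  shows "\<exists>D\<ge>Y. (\<forall>x\<ge>D. g integrable_on {x..}) \<and>
     (\<forall>x\<ge>D. DERIV (\<lambda>x. integral {x..} g) x :> - g x) \<and>
     ((\<lambda>x. integral {x..} g) \<longlongrightarrow> 0) at_top \<and>
     (\<forall>x\<ge>D. integral {x..} g > 0) \<and>
     ((\<lambda>x. integral {x..} g / (x * g x)) \<longlongrightarrow> 1/\<sigma>) at_top"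
proof -
  define F where "F x = integral {x..} g" for x
  have "((\<lambda>x. ln (g x) / ln x) \<longlongrightarrow> -1-\<sigma>) at_top"
    apply (rule log_ratio_limit[OF _ _ glim])
    using gpos gd by (auto simp: eventually_at_top_linorder)
  from log_ratio_upper[OF _ this, of "\<sigma>/2"] gpos \<sigma>
  have "eventually (\<lambda>x. g x \<le> x powr (-1-\<sigma>/2)) at_top"
    by (auto simp: eventually_at_top_linorder algebra_simps)
  then obtain D0 where D0: "\<And>x. x \<ge> D0 \<Longrightarrow> g x \<le> x powr (-1-\<sigma>/2)"
    by (auto simp: eventually_at_top_linorder)
  define D1 where "D1 = max D0 Y"
  have D1: "D1 \<ge> Y" "D1 > 0" using Y by (auto simp: D1_def)
  have bound: "g x \<le> x powr (-1-\<sigma>/2)" if "x \<ge> D1" for x using D0 that by (auto simp: D1_def)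
  have gisc: "isCont g x" if "x \<ge> Y" for x using gd that DERIV_isCont by blast
  have gcont: "continuous_on {a..} g" if "a \<ge> Y" for a
    using gisc that by (auto intro!: continuous_at_imp_continuous_on)
  have gcont2: "continuous_on {a..b} g" if "a \<ge> Y" for a b
    using gisc that by (auto intro!: continuous_at_imp_continuous_on)
  have int: "g integrable_on {x..}" if "x \<ge> D1" for x
  proof -
    have "g absolutely_integrable_on {x..}"
    proof (rule measurable_bounded_by_integrable_imp_absolutely_integrable)
      show "g \<in> borel_measurable (lebesgue_on {x..})"
        using gcont[of x] that D1 by (intro continuous_imp_measurable_on_sets_lebesgue) auto
      show "{x..} \<in> sets lebesgue" by simp
      show "(\<lambda>y. y powr (-1-\<sigma>/2)) integrable_on {x..}"
        using has_integral_powr_to_inf[of "-1-\<sigma>/2" x] \<sigma> that D1 by (auto simp: integrable_on_def)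
      show "norm (g y) \<le> y powr (-1-\<sigma>/2)" if "y \<in> {x..}" for y
      proof -
        have "g y > 0" using gpos that \<open>x \<ge> D1\<close> D1 by auto
        thus ?thesis using bound[of y] that \<open>x \<ge> D1\<close> by auto
      qed
    qed
    thus ?thesis by (simp add: absolutely_integrable_on_def)
  qed
  have Fle: "F x \<le> x powr (-\<sigma>/2) / (\<sigma>/2)" if "x \<ge> D1" for x
  proof -
    have "F x \<le> integral {x..} (\<lambda>y. y powr (-1-\<sigma>/2))"
      unfolding F_def
      apply (rule integral_le[OF int])
      using has_integral_powr_to_inf[of "-1-\<sigma>/2" x] \<sigma> that D1 bound
      by (auto simp: integrable_on_def)
    also have "\<dots> = x powr (-\<sigma>/2) / (\<sigma>/2)"
      using has_integral_powr_to_inf[of "-1-\<sigma>/2" x] \<sigma> that D1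
      by (auto dest!: integral_unique simp: field_simps)
    finally show ?thesis .
  qed
  have Fnn: "F x \<ge> 0" if "x \<ge> D1" for x
    unfolding F_def using int[OF that] gpos that D1 by (intro integral_nonneg) (auto simp: less_imp_le)
  have Fsplit: "F z = integral {z..b} g + F b" if "D1 \<le> z" "z \<le> b" for z b
    unfolding F_def using that D1
    by (intro split_tail) (auto intro!: int integrable_continuous_interval gcont2)
  have Fder: "DERIV F x :> - g x" if "x > D1" for x
  proof -
    have d1: "((\<lambda>z. integral {z..x+1} g) has_real_derivative - g x) (at x within {D1..x+1})"
      using that D1 by (intro integral_has_real_derivative' gcont2) auto
    have d2: "((\<lambda>z. integral {z..x+1} g) has_real_derivative - g x) (at x)"
      using d1 at_within_Icc_at[of D1 x "x+1"] that by simp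
    have d3: "((\<lambda>z. integral {z..x+1} g + F (x+1)) has_real_derivative - g x + 0) (at x)"
      by (rule DERIV_add[OF d2 DERIV_const])
    show ?thesis
    proof (rule has_field_derivative_transform_within_open[where S = "{D1<..<x+1}"])
      show "((\<lambda>z. integral {z..x+1} g + F (x+1)) has_real_derivative - g x) (at x)" using d3 by simp
      show "x \<in> {D1<..<x+1}" using that by simp
      fix z assume "z \<in> {D1<..<x+1}"
      thus "integral {z..x+1} g + F (x+1) = F z" using Fsplit[of z "x+1"] by simp
    qed simp
  qed
  define D where "D = D1 + 1"
  have Flim: "(F \<longlongrightarrow> 0) at_top"
  proof (rule tendsto_sandwich[where f = "\<lambda>_. 0" and h = "\<lambda>x. x powr (-\<sigma>/2) / (\<sigma>/2)"])
    show "eventually (\<lambda>x. 0 \<le> F x) at_top" using Fnn by (auto simp: eventually_at_top_linorder)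
    show "eventually (\<lambda>x. F x \<le> x powr (-\<sigma>/2) / (\<sigma>/2)) at_top"
      using Fle by (auto simp: eventually_at_top_linorder)
    have "((\<lambda>x. x powr (-\<sigma>/2)) \<longlongrightarrow> 0) at_top"
      using \<sigma> by (intro tendsto_neg_powr filterlim_ident) auto
    thus "((\<lambda>x. x powr (-\<sigma>/2) / (\<sigma>/2)) \<longlongrightarrow> 0) at_top"
      by (rule tendsto_divide_zero)
  qed simp
  have Fpos: "F x > 0" if xD: "x \<ge> D" for x
  proof -
    have der: "\<exists>y. DERIV F z :> y \<and> y < 0" if "x \<le> z" "z \<le> x + 1" for z
    proof -
      have "z > D1" "z \<ge> Y" using that xD D1 by (auto simp: D_def)
      thus ?thesis using Fder[of z] gpos by force
    qed
    have "F x > F (x+1)"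
      by (rule DERIV_neg_imp_decreasing[of x "x+1" F]) (use der in auto)
    thus ?thesis using Fnn[of "x+1"] xD by (auto simp: D_def)
  qed
  have xg0: "((\<lambda>x. x * g x) \<longlongrightarrow> 0) at_top"
  proof (rule tendsto_sandwich[where f = "\<lambda>_. 0" and h = "\<lambda>x. x powr (-\<sigma>/2)"])
    show "eventually (\<lambda>x. 0 \<le> x * g x) at_top" using gpos Y
      by (auto simp: eventually_at_top_linorder intro!: exI[of _ Y])
    show "eventually (\<lambda>x. x * g x \<le> x powr (-\<sigma>/2)) at_top"
    proof -
      have "x * g x \<le> x powr (-\<sigma>/2)" if "x \<ge> D1" for x
      proof -
        have "x * g x \<le> x * x powr (-1-\<sigma>/2)" using bound[OF that] that D1 by (auto intro!: mult_left_mono)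
        also have "\<dots> = x powr (-\<sigma>/2)" using that D1
          by (simp add: powr_add[symmetric] powr_mult_base)
        finally show ?thesis .
      qed
      thus ?thesis by (auto simp: eventually_at_top_linorder)
    qed
    show "((\<lambda>x. x powr (-\<sigma>/2)) \<longlongrightarrow> 0) at_top"
      using \<sigma> by (intro tendsto_neg_powr filterlim_ident) auto
  qed simp
  have ev1: "eventually (\<lambda>y. y * g' y / g y < -1) at_top"
    using glim \<sigma> by (intro order_tendstoD) auto
  have ratio: "((\<lambda>x. F x / (x * g x)) \<longlongrightarrow> 1/\<sigma>) at_top"
  proof (rule lhopital_at_top_0[where f' = "\<lambda>x. - g x" and g' = "\<lambda>x. g x + x * g' x"])
    show "(F \<longlongrightarrow> 0) at_top" by (rule Flim)
    show "((\<lambda>x. x * g x) \<longlongrightarrow> 0) at_top" by (rule xg0)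
    show "eventually (\<lambda>x. x * g x \<noteq> 0) at_top" using gpos Y
      by (auto simp: eventually_at_top_linorder intro!: exI[of _ Y])
    show "eventually (\<lambda>x. g x + x * g' x \<noteq> 0) at_top"
      using ev1 eventually_ge_at_top[of Y]
    proof eventually_elim
      case (elim x)
      then have "g x > 0" using gpos by auto
      with elim have "x * g' x < - g x" by (simp add: field_simps)
      thus ?case by auto
    qed
    show "eventually (\<lambda>x. DERIV F x :> - g x) at_top"
      using eventually_gt_at_top[of D1] by eventually_elim (rule Fder)
    show "eventually (\<lambda>x. ((\<lambda>x. x * g x) has_real_derivative g x + x * g' x) (at x)) at_top"
      using eventually_ge_at_top[of Y]
      by eventually_elim (use gd in \<open>auto intro!: derivative_eq_intros\<close>)
    have "((\<lambda>x. - 1 / (1 + x * g' x / g x)) \<longlongrightarrow> - 1 / (1 + (-1-\<sigma>))) at_top"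
      using \<sigma> by (intro tendsto_intros glim) auto
    hence "((\<lambda>x. - 1 / (1 + x * g' x / g x)) \<longlongrightarrow> 1 / \<sigma>) at_top" by simp
    thus "((\<lambda>x. - g x / (g x + x * g' x)) \<longlongrightarrow> 1 / \<sigma>) at_top"
    proof (rule Lim_transform_eventually)
      show "eventually (\<lambda>x. - 1 / (1 + x * g' x / g x) = - g x / (g x + x * g' x)) at_top"
        using eventually_ge_at_top[of Y]
      proof eventually_elim
        case (elim x)
        then have "g x > 0" using gpos by auto
        thus ?case by (simp add: field_simps)
      qed
    qed
  qed
  show ?thesis
    apply (rule exI[of _ D])
    using D1 int Fder Flim Fpos ratio unfolding F_def D_def by auto
qed

lemma head_integral:
  fixes K K' :: "real \<Rightarrow> real" and \<theta> t0 M :: real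
  assumes \<theta>: "\<theta> \<ge> 0" and t0: "t0 > 0"
   and Kpos: "\<forall>t\<in>{0<..<t0}. K t > 0"
   and Kd: "\<forall>t\<in>{0<..<t0}. DERIV K t :> K' t"
   and Klim: "((\<lambda>t. t * K' t / K t) \<longlongrightarrow> \<theta>) (at_right 0)"
   and Kbdd: "\<forall>t\<in>{0<..<t0}. K t \<le> M"
  shows "(\<forall>t\<in>{0<..<t0}. K integrable_on {0..t}) \<and>
     (\<forall>t\<in>{0<..<t0}. DERIV (\<lambda>t. integral {0..t} K) t :> K t) \<and>
     ((\<lambda>t. integral {0..t} K) \<longlongrightarrow> 0) (at_right 0) \<and>
     (\<forall>t\<in>{0<..<t0}. integral {0..t} K > 0) \<and>
     ((\<lambda>t. integral {0..t} K / (t * K t)) \<longlongrightarrow> 1/(\<theta>+1)) (at_right 0)"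
proof -
  define G where "G t = integral {0..t} K" for t
  have M0: "M > 0" using Kpos Kbdd t0 by (metis greaterThanLessThan_iff half_gt_zero less_le_trans field_sum_of_halves less_add_same_cancel1)
  have Kisc: "isCont K t" if "t \<in> {0<..<t0}" for t using Kd that DERIV_isCont by blast
  have int: "K integrable_on {0..t}" if t: "t \<in> {0<..<t0}" for t
  proof -
    have "K absolutely_integrable_on {0<..t}"
    proof (rule measurable_bounded_by_integrable_imp_absolutely_integrable)
      show "K \<in> borel_measurable (lebesgue_on {0<..t})"
        using Kisc t by (intro continuous_imp_measurable_on_sets_lebesgue continuous_at_imp_continuous_on) auto
      show "{0<..t} \<in> sets lebesgue" by simp
      have "bounded {0<..t}" by (rule bounded_subset[of "cbox 0 t"]) auto
      thus "(\<lambda>y. M) integrable_on {0<..t}"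
        by (intro integrable_on_const bounded_set_imp_lmeasurable) auto
      show "norm (K y) \<le> M" if "y \<in> {0<..t}" for y
      proof -
        have "K y > 0" "K y \<le> M" using Kpos Kbdd that t by auto
        thus ?thesis by simp
      qed
    qed
    hence "K integrable_on {0<..t}" by (simp add: absolutely_integrable_on_def)
    moreover have "negligible (({0<..t} - {0..t}) \<union> ({0..t} - {0<..t}))"
    proof -
      have "({0<..t} - {0..t}) \<union> ({0..t} - {0<..t}) = {0::real}" using t by auto
      thus ?thesis by simp
    qed
    ultimately show ?thesis using integrable_spike_set_eq by blast
  qed
  have Gbounds: "0 \<le> G t \<and> G t \<le> M * t" if t: "t \<in> {0<..<t0}" for t
  proof -
    define K0 where "K0 s = (if s = 0 then 0 else K s)" for s
    have eq: "G t = integral {0..t} K0"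
      unfolding G_def by (rule integral_spike[of "{0}"]) (auto simp: K0_def)
    have i0: "K0 integrable_on {0..t}"
      by (rule integrable_spike[OF int[OF t], of "{0}"]) (auto simp: K0_def)
    have "0 \<le> integral {0..t} K0"
      using i0 Kpos t by (intro integral_nonneg) (auto simp: K0_def less_imp_le)
    moreover have "integral {0..t} K0 \<le> integral {0..t} (\<lambda>_. M)"
      using i0 Kpos Kbdd t M0 by (intro integral_le) (auto simp: K0_def)
    ultimately show ?thesis using eq t by (simp add: mult.commute)
  qed
  have Gder: "DERIV G t :> K t" if t: "t \<in> {0<..<t0}" for t
  proof -
    define c where "c = t / 2"
    define b where "b = (t + t0) / 2"
    have cb: "0 < c" "c < t" "t < b" "b < t0" using t by (auto simp: c_def b_def)
    have cont: "continuous_on {c..b} K"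
      using Kisc cb by (intro continuous_at_imp_continuous_on) auto
    have d1: "((\<lambda>z. integral {c..z} K) has_real_derivative K t) (at t within {c..b})"
      using cb by (intro integral_has_real_derivative cont) auto
    have d2: "((\<lambda>z. integral {c..z} K) has_real_derivative K t) (at t)"
      using d1 at_within_Icc_at[of c t b] cb by simp
    have d3: "((\<lambda>z. G c + integral {c..z} K) has_real_derivative 0 + K t) (at t)"
      by (rule DERIV_add[OF DERIV_const d2])
    show ?thesis
    proof (rule has_field_derivative_transform_within_open[where S = "{c<..<b}"])
      show "((\<lambda>z. G c + integral {c..z} K) has_real_derivative K t) (at t)" using d3 by simp
      show "t \<in> {c<..<b}" using cb by simp
      fix z assume z: "z \<in> {c<..<b}"
      have "integral {0..c} K + integral {c..z} K = integral {0..z} K"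
        using z cb by (intro Henstock_Kurzweil_Integration.integral_combine[OF _ _ int[of z]]) auto
      thus "G c + integral {c..z} K = G z" by (simp add: G_def)
    qed simp
  qed
  have ev: "eventually (\<lambda>t. t \<in> {0<..<t0}) (at_right 0)"
    using t0 by (auto simp: eventually_at_right_field intro!: exI[of _ t0])
  have Glim: "(G \<longlongrightarrow> 0) (at_right 0)"
  proof (rule tendsto_sandwich[where f = "\<lambda>_. 0" and h = "\<lambda>t. M * t"])
    show "eventually (\<lambda>t. 0 \<le> G t) (at_right 0)" using ev by eventually_elim (use Gbounds in auto)
    show "eventually (\<lambda>t. G t \<le> M * t) (at_right 0)" using ev by eventually_elim (use Gbounds in auto)
    show "((\<lambda>t. M * t) \<longlongrightarrow> 0) (at_right 0)"
      by (rule tendsto_mult_right_zero) (rule tendsto_ident_at)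
  qed simp
  have Gpos: "G t > 0" if t: "t \<in> {0<..<t0}" for t
  proof -
    have "G (t/2) < G t"
    proof (rule DERIV_pos_imp_increasing[of "t/2" t G])
      show "t/2 < t" using t by simp
      fix z assume "t/2 \<le> z" "z \<le> t"
      hence "z \<in> {0<..<t0}" using t by auto
      thus "\<exists>y. DERIV G z :> y \<and> 0 < y" using Gder Kpos by blast
    qed
    moreover have "G (t/2) \<ge> 0" using Gbounds[of "t/2"] t by auto
    ultimately show ?thesis by simp
  qed
  have ev1: "eventually (\<lambda>t. t * K' t / K t > -1) (at_right 0)"
    using Klim \<theta> by (intro order_tendstoD) auto
  have ratio: "((\<lambda>t. G t / (t * K t)) \<longlongrightarrow> 1/(\<theta>+1)) (at_right 0)"
  proof (rule lhopital_right_0[where f' = K and g' = "\<lambda>t. K t + t * K' t"])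
    show "(G \<longlongrightarrow> 0) (at_right 0)" by (rule Glim)
    show "((\<lambda>t. t * K t) \<longlongrightarrow> 0) (at_right 0)"
    proof (rule tendsto_sandwich[where f = "\<lambda>_. 0" and h = "\<lambda>t. M * t"])
      show "eventually (\<lambda>t. 0 \<le> t * K t) (at_right 0)" using ev by eventually_elim (use Kpos in \<open>auto simp: less_imp_le\<close>)
      show "eventually (\<lambda>t. t * K t \<le> M * t) (at_right 0)" using ev by eventually_elim (use Kbdd in \<open>auto simp: mult.commute\<close>)
      show "((\<lambda>t. M * t) \<longlongrightarrow> 0) (at_right 0)"
        by (rule tendsto_mult_right_zero) (rule tendsto_ident_at)
    qed simp
    show "eventually (\<lambda>t. t * K t \<noteq> 0) (at_right 0)" using ev by eventually_elim (use Kpos in force)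
    show "eventually (\<lambda>t. K t + t * K' t \<noteq> 0) (at_right 0)"
      using ev ev1
    proof eventually_elim
      case (elim t)
      then have "K t > 0" using Kpos by auto
      with elim have "t * K' t > - K t" by (simp add: field_simps)
      thus ?case by auto
    qed
    show "eventually (\<lambda>t. DERIV G t :> K t) (at_right 0)" using ev by eventually_elim (rule Gder)
    show "eventually (\<lambda>t. ((\<lambda>t. t * K t) has_real_derivative K t + t * K' t) (at t)) (at_right 0)"
      using ev by eventually_elim (use Kd in \<open>auto intro!: derivative_eq_intros\<close>)
    have "((\<lambda>t. 1 / (1 + t * K' t / K t)) \<longlongrightarrow> 1 / (1 + \<theta>)) (at_right 0)"
      using \<theta> by (intro tendsto_intros Klim) auto
    hence "((\<lambda>t. 1 / (1 + t * K' t / K t)) \<longlongrightarrow> 1 / (\<theta> + 1)) (at_right 0)" by (simp add: add.commute)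
    thus "filterlim (\<lambda>t. K t / (K t + t * K' t)) (nhds (1 / (\<theta> + 1))) (at_right 0)"
    proof (rule Lim_transform_eventually)
      show "eventually (\<lambda>t. 1 / (1 + t * K' t / K t) = K t / (K t + t * K' t)) (at_right 0)"
        using ev
      proof eventually_elim
        case (elim t)
        then have "K t > 0" using Kpos by auto
        thus ?case by (simp add: field_simps)
      qed
    qed
  qed
  show ?thesis using int Gder Glim Gpos ratio unfolding G_def by auto
qed

lemma compose_inverse:
  fixes F g G K :: "real \<Rightarrow> real" and Dd t0 :: real
  assumes t0: "t0 > 0"
    and Fd: "\<forall>x\<ge>Dd. DERIV F x :> - g x"
    and gpos: "\<forall>x\<ge>Dd. g x > 0"
    and Flim: "(F \<longlongrightarrow> 0) at_top"
    and Fpos: "\<forall>x\<ge>Dd. F x > 0"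
    and Gd: "\<forall>t\<in>{0<..<t0}. DERIV G t :> K t"
    and Glim: "(G \<longlongrightarrow> 0) (at_right 0)"
    and Gpos: "\<forall>t\<in>{0<..<t0}. G t > 0"
  shows "\<exists>\<beta>. 0 < \<beta> \<and> \<beta> \<le> t0 \<and> (\<exists>\<Phi>.
      (\<forall>t\<in>{0<..<\<beta>}. \<Phi> t > Dd \<and> F (\<Phi> t) = G t \<and> (\<forall>x\<ge>Dd. F x = G t \<longrightarrow> x = \<Phi> t)
          \<and> DERIV \<Phi> t :> - K t / g (\<Phi> t)) \<and>
      filterlim \<Phi> at_top (at_right 0))"
proof -
  have dec: "F x > F y" if "Dd \<le> x" "x < y" for x y
  proof (rule DERIV_neg_imp_decreasing[of x y F])
    fix z assume "x \<le> z" "z \<le> y"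
    hence "z \<ge> Dd" using that by auto
    thus "\<exists>y. DERIV F z :> y \<and> y < 0" using Fd gpos by force
  qed (use that in auto)
  have uniq: "x = y" if "Dd \<le> x" "Dd \<le> y" "F x = F y" for x y
    using dec[of x y] dec[of y x] that by (cases x y rule: linorder_cases) auto
  have Fisc: "isCont F x" if "x \<ge> Dd" for x using Fd that DERIV_isCont by blast
  have ex: "\<exists>x\<ge>Dd. F x = s" if s: "0 < s" "s < F Dd" for s
  proof -
    have "eventually (\<lambda>x. F x < s) at_top" using Flim s by (intro order_tendstoD) auto
    then obtain x1 where x1: "\<And>x. x \<ge> x1 \<Longrightarrow> F x < s" by (auto simp: eventually_at_top_linorder)
    define x2 where "x2 = max x1 Dd"
    have "F x2 \<le> s" "s \<le> F Dd" "Dd \<le> x2" using x1[of x2] s by (auto simp: x2_def)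
    from IVT2[OF this] Fisc obtain x where "Dd \<le> x" "x \<le> x2" "F x = s" by auto
    thus ?thesis by auto
  qed
  define H where "H s = (THE x. x \<ge> Dd \<and> F x = s)" for s
  have H: "H s \<ge> Dd \<and> F (H s) = s" if "0 < s" "s < F Dd" for s
  proof -
    have "\<exists>!x. x \<ge> Dd \<and> F x = s" using ex[OF that] uniq by blast
    thus ?thesis unfolding H_def by (rule theI')
  qed
  have HgtD: "H s > Dd" if "0 < s" "s < F Dd" for s
    using H[OF that] that by (cases "H s = Dd") auto
  have Hd: "DERIV H s :> inverse (- g (H s))" if s: "0 < s" "s < F Dd" for s
  proof (rule DERIV_inverse_function[where f = F and a = 0 and b = "F Dd"])
    show "DERIV F (H s) :> - g (H s)" using Fd H[OF s] by auto
    show "- g (H s) \<noteq> 0" using gpos H[OF s] by force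
    show "0 < s" "s < F Dd" by (rule s)+
    show "F (H y) = y" if "0 < y" "y < F Dd" for y using H[OF that] by auto
    define d where "d = (H s - Dd) / 2"
    have d: "d > 0" using HgtD[OF s] by (simp add: d_def)
    have "isCont H (F (H s))"
    proof (rule isCont_inverse_function[where f = F and g = H and x = "H s" and d = d])
      show "0 < d" by (rule d)
      fix z assume z: "\<bar>z - H s\<bar> \<le> d"
      hence "H s - z \<le> d" by (simp add: abs_le_iff)
      moreover have "H s - d > Dd" using HgtD[OF s] by (simp add: d_def field_simps)
      ultimately have zD: "z > Dd" by linarith
      show "isCont F z" using Fisc zD by auto
      have "F z > 0" "F z < F Dd" using Fpos zD dec[of Dd z] by auto
      from H[OF this] have "H (F z) \<ge> Dd" "F (H (F z)) = F z" by auto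
      thus "H (F z) = z" using uniq zD by auto
    qed
    thus "isCont H s" using H[OF s] by simp
  qed
  have "eventually (\<lambda>t. G t < F Dd) (at_right 0)" using Glim Fpos by (intro order_tendstoD) auto
  then obtain b where b: "b > 0" "\<And>t. 0 < t \<Longrightarrow> t < b \<Longrightarrow> G t < F Dd"
    by (auto simp: eventually_at_right_field)
  define \<beta> where "\<beta> = min b t0"
  have \<beta>: "0 < \<beta>" "\<beta> \<le> t0" using b t0 by (auto simp: \<beta>_def)
  have Grange: "0 < G t \<and> G t < F Dd" if "t \<in> {0<..<\<beta>}" for t
    using that b Gpos by (auto simp: \<beta>_def)
  define \<Phi> where "\<Phi> t = H (G t)" for t
  have P1: "\<Phi> t > Dd \<and> F (\<Phi> t) = G t \<and> (\<forall>x\<ge>Dd. F x = G t \<longrightarrow> x = \<Phi> t)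
          \<and> DERIV \<Phi> t :> - K t / g (\<Phi> t)" if t: "t \<in> {0<..<\<beta>}" for t
  proof (intro conjI allI impI)
    have r: "0 < G t" "G t < F Dd" using Grange[OF t] by auto
    show "\<Phi> t > Dd" using HgtD[OF r] by (simp add: \<Phi>_def)
    show "F (\<Phi> t) = G t" using H[OF r] by (simp add: \<Phi>_def)
    show "x = \<Phi> t" if "x \<ge> Dd" "F x = G t" for x using H[OF r] uniq[of x "H (G t)"] that by (simp add: \<Phi>_def)
    have "DERIV G t :> K t" using Gd t \<beta> by auto
    from DERIV_chain'[OF this Hd[OF r]]
    show "DERIV \<Phi> t :> - K t / g (\<Phi> t)" by (simp add: \<Phi>_def[abs_def] divide_inverse mult.commute)
  qed
  have lim: "filterlim \<Phi> at_top (at_right 0)"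
  unfolding filterlim_at_top
  proof
    fix Z :: real
    define M where "M = max Z Dd"
    have "F M > 0" using Fpos by (auto simp: M_def)
    hence "eventually (\<lambda>t. G t < F M) (at_right 0)" using Glim by (intro order_tendstoD) auto
    moreover have "eventually (\<lambda>t. t \<in> {0<..<\<beta>}) (at_right 0)"
      using \<beta> by (auto simp: eventually_at_right_field intro!: exI[of _ \<beta>])
    ultimately show "eventually (\<lambda>t. Z \<le> \<Phi> t) (at_right 0)"
    proof eventually_elim
      case (elim t)
      have "\<Phi> t > M"
      proof (rule ccontr)
        assume "\<not> \<Phi> t > M"
        hence "\<Phi> t \<le> M" by simp
        moreover have "\<Phi> t \<ge> Dd" using P1[OF elim(2)] by simp
        ultimately have "F (\<Phi> t) \<ge> F M" using dec[of "\<Phi> t" M] by (cases "\<Phi> t = M") auto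
        thus False using P1[OF elim(2)] elim(1) by simp
      qed
      thus ?case by (simp add: M_def)
    qed
  qed
  show ?thesis using \<beta> P1 lim by blast
qed

lemma within_to_at:
  fixes f :: "real \<Rightarrow> real"
  assumes "(f has_real_derivative d) (at x within {B..})" "B < x"
  shows "(f has_real_derivative d) (at x)"
  using assms at_within_interior[of x "{B..}"] by simp

lemma ln_ratio_step:
  fixes x y :: "'a \<Rightarrow> real"
  assumes lim: "((\<lambda>t. x t / y t) \<longlongrightarrow> c) F" and c: "c > 0" and y: "filterlim y at_top F"
  shows "((\<lambda>t. ln (x t) / ln (y t)) \<longlongrightarrow> 1) F \<and> filterlim (\<lambda>t. ln (y t)) at_top F"
proof
  show ly: "filterlim (\<lambda>t. ln (y t)) at_top F" by (rule filterlim_compose[OF ln_at_top y])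
  have e1: "eventually (\<lambda>t. x t / y t > 0) F" using lim c by (intro order_tendstoD) auto
  have e2: "eventually (\<lambda>t. y t > 1) F" using y by (simp add: filterlim_at_top_dense)
  have e3: "eventually (\<lambda>t. ln (y t) > 0) F" using ly by (simp add: filterlim_at_top_dense)
  have "((\<lambda>t. ln (x t / y t) * inverse (ln (y t)) + 1) \<longlongrightarrow> ln c * 0 + 1) F"
    using c by (intro tendsto_intros lim tendsto_inverse_0_at_top ly) auto
  hence "((\<lambda>t. ln (x t / y t) * inverse (ln (y t)) + 1) \<longlongrightarrow> 1) F" by simp
  thus "((\<lambda>t. ln (x t) / ln (y t)) \<longlongrightarrow> 1) F"
  proof (rule Lim_transform_eventually)
    show "eventually (\<lambda>t. ln (x t / y t) * inverse (ln (y t)) + 1 = ln (x t) / ln (y t)) F"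
      using e1 e2 e3
    proof eventually_elim
      case (elim t)
      have "y t > 0" using elim by simp
      moreover have "x t > 0" using elim \<open>y t > 0\<close> by (simp add: zero_less_divide_iff)
      ultimately have "ln (x t / y t) = ln (x t) - ln (y t)" by (simp add: ln_div)
      thus ?case using elim by (simp add: field_simps)
    qed
  qed
qed

lemma iterated_logs:
  fixes a b :: "'a \<Rightarrow> real"
  assumes b: "filterlim b at_top F" and lim: "((\<lambda>t. ln (a t) / ln (b t)) \<longlongrightarrow> \<alpha>) F" and \<alpha>: "\<alpha> > 0"
  shows "\<forall>m::nat\<ge>1. ((\<lambda>t. logm m (a t) / logm m (b t)) \<longlongrightarrow> (if m = 1 then \<alpha> else 1)) F"
proof -
  have "((\<lambda>t. logm m (a t) / logm m (b t)) \<longlongrightarrow> (if m = 1 then \<alpha> else 1)) F \<and>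
        filterlim (\<lambda>t. logm m (b t)) at_top F" if "m \<ge> 1" for m
    using that
  proof (induction m rule: dec_induct)
    case base
    have "logm 1 = ln" by (simp add: logm_def)
    thus ?case using lim filterlim_compose[OF ln_at_top b] by simp
  next
    case (step m)
    have c: "(if m = 1 then \<alpha> else 1) > 0" using \<alpha> by simp
    from ln_ratio_step[OF step.IH[THEN conjunct1] c step.IH[THEN conjunct2]]
    have "((\<lambda>t. ln (logm m (a t)) / ln (logm m (b t))) \<longlongrightarrow> 1) F \<and>
          filterlim (\<lambda>t. ln (logm m (b t))) at_top F" .
    moreover have "logm (Suc m) z = ln (logm m z)" for z by (simp add: logm_def)
    ultimately show ?case using step by simp
  qed
  thus ?thesis by blast
qed

lemma L_growth:
  fixes L l l' :: "real \<Rightarrow> real" and \<delta> :: real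
  assumes lpos: "eventually (\<lambda>y. l y > 0) at_top"
    and ld: "eventually (\<lambda>y. DERIV l y :> l' y) at_top"
    and llim: "((\<lambda>y. y * l' y / l y) \<longlongrightarrow> 0) at_top"
    and Ld: "eventually (\<lambda>y. DERIV L y :> l y / y) at_top"
    and \<delta>: "\<delta> > 0"
  shows "((\<lambda>y. L y / l y * y powr (-2*\<delta>)) \<longlongrightarrow> 0) at_top"
proof -
  have lr: "((\<lambda>y. ln (l y) / ln y) \<longlongrightarrow> 0) at_top"
    by (rule log_ratio_limit[OF lpos ld llim])
  have bnd: "eventually (\<lambda>y. l y \<le> y powr (0 + \<delta>/2) \<and> y powr (0 - \<delta>/2) \<le> l y) at_top"
    using \<delta> by (intro log_ratio_upper[OF lpos lr]) auto
  have p0: "((\<lambda>y. y powr (-\<delta>/2)) \<longlongrightarrow> 0) at_top"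
    using \<delta> by (intro tendsto_neg_powr filterlim_ident) auto
  have A: "((\<lambda>y. y powr (-\<delta>) / l y) \<longlongrightarrow> 0) at_top"
  proof (rule tendsto_sandwich[where f = "\<lambda>_. 0" and h = "\<lambda>y. y powr (-\<delta>/2)"])
    show "eventually (\<lambda>y. 0 \<le> y powr (-\<delta>) / l y) at_top" using lpos by eventually_elim auto
    show "eventually (\<lambda>y. y powr (-\<delta>) / l y \<le> y powr (-\<delta>/2)) at_top"
      using bnd lpos eventually_gt_at_top[of 0]
    proof eventually_elim
      case (elim y)
      have "y powr (-\<delta>) = y powr (-\<delta>/2) * y powr (-\<delta>/2)"
        by (simp add: powr_add[symmetric])
      also have "\<dots> \<le> y powr (-\<delta>/2) * l y" using elim by (intro mult_left_mono) auto
      finally show ?case using elim by (simp add: divide_le_eq)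
    qed
  qed (insert p0, auto)
  have B: "((\<lambda>y. L y / y powr \<delta>) \<longlongrightarrow> 0) at_top"
  proof (rule lhospital_at_top_at_top[where f' = "\<lambda>y. l y / y" and g' = "\<lambda>y. \<delta> * y powr (\<delta> - 1)"])
    have h: "filterlim (\<lambda>y. exp (\<delta> * ln y)) at_top at_top"
      by (intro filterlim_compose[OF exp_at_top] filterlim_tendsto_pos_mult_at_top[OF tendsto_const \<delta> ln_at_top])
    have ev: "eventually (\<lambda>y. exp (\<delta> * ln y) = y powr \<delta>) at_top"
      using eventually_gt_at_top[of 0] by eventually_elim (simp add: powr_def)
    show "filterlim (\<lambda>y. y powr \<delta>) at_top at_top"
      using filterlim_cong[OF refl refl ev] h by simp
    show "eventually (\<lambda>y. \<delta> * y powr (\<delta> - 1) \<noteq> 0) at_top"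
      using eventually_gt_at_top[of 0] by eventually_elim (use \<delta> in auto)
    show "eventually (\<lambda>y. DERIV L y :> l y / y) at_top" by (rule Ld)
    show "eventually (\<lambda>y. ((\<lambda>y. y powr \<delta>) has_real_derivative \<delta> * y powr (\<delta> - 1)) (at y)) at_top"
      using eventually_gt_at_top[of 0] by eventually_elim (auto intro!: derivative_eq_intros)
    show "((\<lambda>y. l y / y / (\<delta> * y powr (\<delta> - 1))) \<longlongrightarrow> 0) at_top"
    proof (rule tendsto_sandwich[where f = "\<lambda>_. 0" and h = "\<lambda>y. y powr (-\<delta>/2) / \<delta>"])
      show "eventually (\<lambda>y. 0 \<le> l y / y / (\<delta> * y powr (\<delta> - 1))) at_top"
        using lpos eventually_gt_at_top[of 0] by eventually_elim (use \<delta> in auto)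
      show "eventually (\<lambda>y. l y / y / (\<delta> * y powr (\<delta> - 1)) \<le> y powr (-\<delta>/2) / \<delta>) at_top"
        using bnd lpos eventually_gt_at_top[of 0]
      proof eventually_elim
        case (elim y)
        have "y * y powr (\<delta> - 1) = y powr \<delta>" using elim
          by (simp add: powr_mult_base)
        hence "l y / y / (\<delta> * y powr (\<delta> - 1)) = l y / (\<delta> * y powr \<delta>)" using elim
          by (simp add: field_simps)
        also have "\<dots> \<le> y powr (\<delta>/2) / (\<delta> * y powr \<delta>)" using elim \<delta> by (intro divide_right_mono) auto
        also have "\<dots> = y powr (-\<delta>/2) / \<delta>"
        proof -
          have "y powr (\<delta>/2) = y powr (-\<delta>/2) * y powr \<delta>" by (simp add: powr_add[symmetric])
          thus ?thesis using elim \<delta> by (simp add: field_simps)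
        qed
        finally show ?case .
      qed
      show "((\<lambda>y. y powr (-\<delta>/2) / \<delta>) \<longlongrightarrow> 0) at_top" using p0 by (rule tendsto_divide_zero)
    qed simp
  qed
  have "((\<lambda>y. (L y / y powr \<delta>) * (y powr (-\<delta>) / l y)) \<longlongrightarrow> 0 * 0) at_top"
    by (intro tendsto_mult A B)
  hence "((\<lambda>y. (L y / y powr \<delta>) * (y powr (-\<delta>) / l y)) \<longlongrightarrow> 0) at_top" by simp
  thus ?thesis
  proof (rule Lim_transform_eventually)
    show "eventually (\<lambda>y. (L y / y powr \<delta>) * (y powr (-\<delta>) / l y) = L y / l y * y powr (-2*\<delta>)) at_top"
      using eventually_gt_at_top[of 0]
    proof eventually_elim
      case (elim y)
      have P: "y powr \<delta> > 0" using elim by simp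
      have e1: "y powr (-2*\<delta>) = inverse (y powr (2*\<delta>))" by (simp add: powr_minus[symmetric])
      have e2: "y powr (2*\<delta>) = y powr \<delta> * y powr \<delta>" by (simp add: powr_add[symmetric])
      have e3: "y powr (-\<delta>) = inverse (y powr \<delta>)" by (simp add: powr_minus)
      show ?case unfolding e1 e2 e3 using P by (simp add: field_simps)
    qed
  qed
qed

lemma nsvE:
  assumes "nsv L B"
  obtains L' where "\<forall>u\<ge>B. L u > 0" "\<forall>u>B. DERIV L u :> L' u" "\<forall>u>B. isCont L' u"
    "((\<lambda>u. u * L' u / L u) \<longlongrightarrow> 0) at_top"
proof -
  from assms obtain L' where a: "\<forall>u\<ge>B. L u > 0"
    "\<forall>u\<ge>B. (L has_real_derivative L' u) (at u within {B..})"
    "continuous_on {B..} L'" "((\<lambda>u. u * L' u / L u) \<longlongrightarrow> 0) at_top"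
    unfolding nsv_def by blast
  have "\<forall>u>B. DERIV L u :> L' u"
  proof (intro allI impI)
    fix u assume "u > B"
    thus "DERIV L u :> L' u" using a(2) within_to_at[of L "L' u" u B] by auto
  qed
  moreover have "\<forall>u>B. isCont L' u" using a(3) continuous_on_interior by fastforce
  ultimately show ?thesis using that a by blast
qed

lemma g_props:
  fixes \<rho> A B1 Bf :: real and L1 L2 l1 l1' Lf Lf' g :: "real \<Rightarrow> real"
  assumes rho: "\<rho> > 0"
    and L1: "\<forall>x\<ge>A. (L1 has_real_derivative L2 x) (at x within {A..})"
    and L2c: "continuous_on {A..} L2"
    and l1pos: "\<forall>u\<ge>B1. l1 u > 0" and B1: "B1 > 0"
    and l1d: "\<forall>u>B1. DERIV l1 u :> l1' u"
    and l1lim: "((\<lambda>u. u * l1' u / l1 u) \<longlongrightarrow> 0) at_top"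
    and L1eq: "\<forall>u\<ge>B1. L1 u = u powr (-1) * l1 u"
    and Lfpos: "\<forall>u\<ge>Bf. Lf u > 0"
    and Lfd: "\<forall>u>Bf. DERIV Lf u :> Lf' u"
    and Lfc: "\<forall>u>Bf. isCont Lf' u"
    and Lflim: "((\<lambda>u. u * Lf' u / Lf u) \<longlongrightarrow> 0) at_top"
    and g_def: "g = (\<lambda>y. sqrt (L1 y) / (y powr ((\<rho> + 1) / 2) * sqrt (Lf y)))"
  shows "\<exists>Y>0. Y > A \<and> Y > B1 \<and> Y > Bf \<and> (\<exists>g'. (\<forall>y\<ge>Y. g y > 0) \<and> (\<forall>y\<ge>Y. DERIV g y :> g' y) \<and> (\<forall>y\<ge>Y. isCont g' y) \<and>
     ((\<lambda>y. y * g' y / g y) \<longlongrightarrow> -1-\<rho>/2) at_top)"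
proof -
  define c where "c = (\<rho> + 1) / 2"
  define Y0 where "Y0 = max A (max B1 Bf)"
  define Y where "Y = Y0 + 1"
  have Y: "Y > 0" "Y > A" "Y > B1" "Y > Bf" using B1 by (auto simp: Y_def Y0_def)
  have L1eq': "L1 u = l1 u / u" if "u \<ge> B1" for u
    using L1eq that B1 by (simp add: powr_minus divide_inverse mult.commute)
  have L1pos: "L1 u > 0" if "u > Y0" for u using L1eq' l1pos that B1 by (auto simp: Y0_def)
  have Lfpos': "Lf u > 0" if "u > Y0" for u using Lfpos that by (auto simp: Y0_def)
  have L1d: "DERIV L1 u :> L2 u" if "u > Y0" for u
    using L1 that within_to_at[of L1 "L2 u" u A] by (auto simp: Y0_def)
  have L2isc: "isCont L2 u" if "u > Y0" for u
    using L2c that continuous_on_interior[of "{A..}" L2 u] by (auto simp: Y0_def)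
  have L2eq: "L2 u = (l1' u * u - l1 u) / u^2" if "u > Y0" for u
  proof -
    have "DERIV (\<lambda>u. l1 u / u) u :> (l1' u * u - l1 u * 1) / (u * u)"
      using that l1d B1 by (intro DERIV_divide) (auto simp: Y0_def intro!: derivative_eq_intros)
    hence "DERIV L1 u :> (l1' u * u - l1 u * 1) / (u * u)"
      apply (rule has_field_derivative_transform_within_open[where S = "{B1<..}"])
      using that L1eq' by (auto simp: Y0_def)
    from DERIV_unique[OF L1d[OF that] this] show ?thesis by (simp add: power2_eq_square)
  qed
  have geq: "g u = exp (ln (L1 u) / 2 - c * ln u - ln (Lf u) / 2)" if "u > Y0" for u
  proof -
    have u0: "u > 0" using that B1 by (auto simp: Y0_def)
    have s1: "sqrt (L1 u) = exp (ln (L1 u) / 2)"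
      using L1pos[OF that] by (simp add: powr_half_sqrt[symmetric] powr_def)
    have s2: "sqrt (Lf u) = exp (ln (Lf u) / 2)"
      using Lfpos'[OF that] by (simp add: powr_half_sqrt[symmetric] powr_def)
    have s3: "u powr c = exp (c * ln u)" using u0 by (simp add: powr_def)
    show ?thesis unfolding g_def c_def[symmetric] s1 s2 s3
      by (simp add: exp_diff exp_add[symmetric] field_simps)
  qed
  define g' where "g' u = g u * (L2 u / (2 * L1 u) - c / u - Lf' u / (2 * Lf u))" for u
  have gd: "DERIV g u :> g' u" if "u > Y0" for u
  proof -
    have u0: "u > 0" using that B1 by (auto simp: Y0_def)
    have Lfdu: "DERIV Lf u :> Lf' u" using Lfd that by (auto simp: Y0_def)
    have dl1: "DERIV (\<lambda>u. ln (L1 u)) u :> inverse (L1 u) * L2 u"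
      by (rule DERIV_chain2[OF DERIV_ln[OF L1pos[OF that]] L1d[OF that]])
    have dlf: "DERIV (\<lambda>u. ln (Lf u)) u :> inverse (Lf u) * Lf' u"
      by (rule DERIV_chain2[OF DERIV_ln[OF Lfpos'[OF that]] Lfdu])
    have dln: "DERIV ln u :> inverse u" by (rule DERIV_ln[OF u0])
    have dh: "DERIV (\<lambda>u. ln (L1 u) / 2 - c * ln u - ln (Lf u) / 2) u :>
        inverse (L1 u) * L2 u / 2 - c * inverse u - inverse (Lf u) * Lf' u / 2"
      by (intro DERIV_diff DERIV_cdivide DERIV_cmult dl1 dln dlf)
    have "DERIV (\<lambda>u. exp (ln (L1 u) / 2 - c * ln u - ln (Lf u) / 2)) u :>
       exp (ln (L1 u) / 2 - c * ln u - ln (Lf u) / 2) * (inverse (L1 u) * L2 u / 2 - c * inverse u - inverse (Lf u) * Lf' u / 2)"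
      by (rule DERIV_chain2[OF DERIV_exp dh])
    hence "DERIV g u :> exp (ln (L1 u) / 2 - c * ln u - ln (Lf u) / 2) * (inverse (L1 u) * L2 u / 2 - c * inverse u - inverse (Lf u) * Lf' u / 2)"
      apply (rule has_field_derivative_transform_within_open[where S = "{Y0<..}"])
      using that geq by auto
    moreover have "exp (ln (L1 u) / 2 - c * ln u - ln (Lf u) / 2) * (inverse (L1 u) * L2 u / 2 - c * inverse u - inverse (Lf u) * Lf' u / 2) = g' u"
    proof -
      have "inverse (L1 u) * L2 u / 2 - c * inverse u - inverse (Lf u) * Lf' u / 2 = L2 u / (2 * L1 u) - c / u - Lf' u / (2 * Lf u)"
        using L1pos[OF that] Lfpos'[OF that] u0 by (simp add: field_simps)
      thus ?thesis unfolding g'_def geq[OF that] by simp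
    qed
    ultimately show ?thesis by simp
  qed
  have gpos: "g u > 0" if "u > Y0" for u using geq[OF that] by simp
  have g'c: "isCont g' u" if "u > Y0" for u
  proof -
    have u0: "u > 0" using that B1 by (auto simp: Y0_def)
    have "isCont g u" using gd[OF that] DERIV_isCont by blast
    moreover have "isCont L1 u" using L1d[OF that] DERIV_isCont by blast
    moreover have "isCont Lf u" using Lfd that DERIV_isCont by (force simp: Y0_def)
    moreover have "isCont Lf' u" using Lfc that by (auto simp: Y0_def)
    ultimately show ?thesis unfolding g'_def using L2isc[OF that] L1pos[OF that] Lfpos'[OF that] u0
      by (intro continuous_intros) auto
  qed
  have lim: "((\<lambda>y. y * g' y / g y) \<longlongrightarrow> -1-\<rho>/2) at_top"
  proof -
    have "((\<lambda>y. (y * l1' y / l1 y - 1) / 2 - c - y * Lf' y / Lf y / 2) \<longlongrightarrow> (0 - 1) / 2 - c - 0 / 2) at_top"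
      by (intro tendsto_intros l1lim Lflim) auto
    moreover have "(0 - 1) / 2 - c - 0 / 2 = -1-\<rho>/2" by (simp add: c_def field_simps)
    ultimately have "((\<lambda>y. (y * l1' y / l1 y - 1) / 2 - c - y * Lf' y / Lf y / 2) \<longlongrightarrow> -1-\<rho>/2) at_top"
      by simp
    thus ?thesis
    proof (rule Lim_transform_eventually)
      show "eventually (\<lambda>y. (y * l1' y / l1 y - 1) / 2 - c - y * Lf' y / Lf y / 2 = y * g' y / g y) at_top"
        using eventually_gt_at_top[of Y0]
      proof eventually_elim
        case (elim y)
        have y0: "y > 0" using elim B1 by (auto simp: Y0_def)
        have l1p: "l1 y > 0" using l1pos elim by (auto simp: Y0_def)
        have "y * g' y / g y = y * L2 y / (2 * L1 y) - c - y * Lf' y / (2 * Lf y)"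
          using gpos[OF elim] y0 by (simp add: g'_def field_simps)
        also have "y * L2 y / (2 * L1 y) = (y * l1' y / l1 y - 1) / 2"
        proof -
          have L1y: "L1 y = l1 y / y" using L1eq' elim by (auto simp: Y0_def)
          show ?thesis unfolding L1y L2eq[OF elim] using y0 l1p by (simp add: field_simps power2_eq_square)
        qed
        finally show ?case by (simp add: field_simps)
      qed
    qed
  qed
  show ?thesis
    apply (rule exI[of _ Y], intro conjI, rule Y, rule Y, rule Y, rule Y)
    apply (rule exI[of _ g'])
    using gpos gd g'c lim Y unfolding Y_def by auto
qed

lemma K_props:
  fixes \<theta> :: real and K :: "real \<Rightarrow> real"
  assumes theta: "\<theta> \<ge> 0" and K: "NRV0 \<theta> K"
    and Kmono: "\<theta> = 0 \<longrightarrow> (\<exists>\<delta>>0. mono_on {0<..<\<delta>} K)"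
  shows "\<exists>t0>0. \<exists>K' M. (\<forall>t\<in>{0<..<t0}. K t > 0) \<and> (\<forall>t\<in>{0<..<t0}. DERIV K t :> K' t) \<and>
     (\<forall>t\<in>{0<..<t0}. isCont K' t) \<and> ((\<lambda>t. t * K' t / K t) \<longlongrightarrow> \<theta>) (at_right 0) \<and>
     (\<forall>t\<in>{0<..<t0}. K t \<le> M)"
proof -
  from K obtain l BK where BK: "BK > 0" and nl: "nsv l BK" and Keq: "\<forall>u\<ge>BK. K (1/u) = u powr (-\<theta>) * l u"
    unfolding NRV0_def NRV_def by auto
  from nsvE[OF nl] obtain l' where lpos: "\<forall>u\<ge>BK. l u > 0" and ld: "\<forall>u>BK. DERIV l u :> l' u"
    and lc: "\<forall>u>BK. isCont l' u" and llim: "((\<lambda>u. u * l' u / l u) \<longlongrightarrow> 0) at_top" by blast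
  define T where "T = 1 / BK"
  have T: "T > 0" using BK by (simp add: T_def)
  have inv: "1 / t > BK" if "t \<in> {0<..<T}" for t
    using that BK by (auto simp: T_def field_simps)
  have Keq2: "K t = exp (\<theta> * ln t + ln (l (1/t)))" if t: "t \<in> {0<..<T}" for t
  proof -
    have "K t = K (1 / (1/t))" by simp
    also have "\<dots> = (1/t) powr (-\<theta>) * l (1/t)" by (rule Keq[rule_format]) (use inv[OF t] in auto)
    also have "(1/t) powr (-\<theta>) = t powr \<theta>" using t by (simp add: powr_divide powr_minus_divide)
    also have "t powr \<theta> = exp (\<theta> * ln t)" using t by (simp add: powr_def)
    also have "l (1/t) = exp (ln (l (1/t)))" using lpos inv[OF t] by simp
    finally show ?thesis by (simp add: exp_add)
  qed
  have Kpos: "K t > 0" if "t \<in> {0<..<T}" for t using Keq2[OF that] by simp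
  define K' where "K' t = K t * (\<theta> / t - l' (1/t) / (t^2 * l (1/t)))" for t
  have Kd: "DERIV K t :> K' t" if t: "t \<in> {0<..<T}" for t
  proof -
    have t0: "t > 0" using t by simp
    have lp: "l (1/t) > 0" using lpos inv[OF t] by auto
    have d1: "DERIV (\<lambda>t. 1/t) t :> - 1 / t^2" using t0
      by (auto intro!: derivative_eq_intros simp: power2_eq_square field_simps)
    have d2: "DERIV (\<lambda>t. l (1/t)) t :> l' (1/t) * (- 1 / t^2)"
      by (rule DERIV_chain2[OF _ d1]) (use ld inv[OF t] in auto)
    have d3: "DERIV (\<lambda>t. ln (l (1/t))) t :> inverse (l (1/t)) * (l' (1/t) * (- 1 / t^2))"
      by (rule DERIV_chain2[OF DERIV_ln[OF lp] d2])
    have d4: "DERIV (\<lambda>t. \<theta> * ln t + ln (l (1/t))) t :> \<theta> * inverse t + inverse (l (1/t)) * (l' (1/t) * (- 1 / t^2))"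
      by (intro DERIV_add DERIV_cmult DERIV_ln t0 d3)
    have d5: "DERIV (\<lambda>t. exp (\<theta> * ln t + ln (l (1/t)))) t :>
        exp (\<theta> * ln t + ln (l (1/t))) * (\<theta> * inverse t + inverse (l (1/t)) * (l' (1/t) * (- 1 / t^2)))"
      by (rule DERIV_chain2[OF DERIV_exp d4])
    have d6: "DERIV K t :> exp (\<theta> * ln t + ln (l (1/t))) * (\<theta> * inverse t + inverse (l (1/t)) * (l' (1/t) * (- 1 / t^2)))"
      apply (rule has_field_derivative_transform_within_open[OF d5, where S = "{0<..<T}"])
      using t Keq2 by auto
    have "\<theta> * inverse t + inverse (l (1/t)) * (l' (1/t) * (- 1 / t^2)) = \<theta> / t - l' (1/t) / (t^2 * l (1/t))"
      using t0 lp by (simp add: field_simps)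
    thus ?thesis using d6 Keq2[OF t] by (simp add: K'_def)
  qed
  have K'c: "isCont K' t" if t: "t \<in> {0<..<T}" for t
  proof -
    have t0: "t > 0" using t by simp
    have lp: "l (1/t) > 0" using lpos inv[OF t] by auto
    have c1: "isCont (\<lambda>t. 1/t) t" using t0 by (intro continuous_intros) auto
    have "isCont l (1/t)" using ld inv[OF t] DERIV_isCont by blast
    hence c2: "isCont (\<lambda>t. l (1/t)) t" using c1 isCont_o2 by blast
    have c3: "isCont (\<lambda>t. l' (1/t)) t" using c1 lc inv[OF t] isCont_o2 by blast
    have c4: "isCont K t" using Kd[OF t] DERIV_isCont by blast
    show ?thesis unfolding K'_def using c2 c3 c4 t0 lp by (intro continuous_intros) auto
  qed
  have ev: "eventually (\<lambda>t. t \<in> {0<..<T}) (at_right 0)"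
    using T by (auto simp: eventually_at_right_field intro!: exI[of _ T])
  have Klim: "((\<lambda>t. t * K' t / K t) \<longlongrightarrow> \<theta>) (at_right 0)"
  proof -
    have "((\<lambda>t. inverse t * l' (inverse t) / l (inverse t)) \<longlongrightarrow> 0) (at_right 0)"
      using llim unfolding filterlim_at_top_to_right by simp
    hence "((\<lambda>t. \<theta> - inverse t * l' (inverse t) / l (inverse t)) \<longlongrightarrow> \<theta> - 0) (at_right 0)"
      by (intro tendsto_intros)
    hence "((\<lambda>t. \<theta> - inverse t * l' (inverse t) / l (inverse t)) \<longlongrightarrow> \<theta>) (at_right 0)" by simp
    thus ?thesis
    proof (rule Lim_transform_eventually)
      show "eventually (\<lambda>t. \<theta> - inverse t * l' (inverse t) / l (inverse t) = t * K' t / K t) (at_right 0)"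
        using ev
      proof eventually_elim
        case (elim t)
        have "K t > 0" "t > 0" using Kpos elim by auto
        moreover have "l (1/t) > 0" using lpos inv[OF elim] by auto
        ultimately show ?case by (simp add: K'_def field_simps power2_eq_square)
      qed
    qed
  qed
  have "\<exists>t0>0. t0 \<le> T \<and> (\<exists>M. \<forall>t\<in>{0<..<t0}. K t \<le> M)"
  proof (cases "\<theta> = 0")
    case True
    with Kmono obtain \<delta> where \<delta>: "\<delta> > 0" "mono_on {0<..<\<delta>} K" by auto
    define t0 where "t0 = min \<delta> T / 2"
    have t0: "t0 > 0" "t0 < \<delta>" "t0 \<le> T" using \<delta> T by (auto simp: t0_def)
    have "K t \<le> K t0" if "t \<in> {0<..<t0}" for t
      using mono_onD[OF \<delta>(2), of t t0] that t0 by auto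
    thus ?thesis using t0 by blast
  next
    case False
    hence \<theta>p: "\<theta> > 0" using theta by simp
    have "eventually (\<lambda>t. t * K' t / K t > 0) (at_right 0)" using Klim \<theta>p by (intro order_tendstoD) auto
    then obtain b where b: "b > 0" "\<And>t. 0 < t \<Longrightarrow> t < b \<Longrightarrow> t * K' t / K t > 0"
      by (auto simp: eventually_at_right_field)
    define t0 where "t0 = min b T / 2"
    have t0: "t0 > 0" "t0 < b" "t0 < T" using b T by (auto simp: t0_def)
    have "K t \<le> K t0" if t: "t \<in> {0<..<t0}" for t
    proof -
      have "K t < K t0"
      proof (rule DERIV_pos_imp_increasing[of t t0 K])
        show "t < t0" using t by simp
        fix s assume s: "t \<le> s" "s \<le> t0"
        hence s': "s \<in> {0<..<T}" "0 < s" "s < b" using t t0 by auto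
        have "s * K' s / K s > 0" using b(2) s' by auto
        hence "K' s > 0" using Kpos[OF s'(1)] s' by (simp add: zero_less_divide_iff zero_less_mult_iff)
        thus "\<exists>y. DERIV K s :> y \<and> 0 < y" using Kd[OF s'(1)] by blast
      qed
      thus ?thesis by simp
    qed
    hence "\<forall>t\<in>{0<..<t0}. K t \<le> K t0" by blast
    thus ?thesis using t0 by (intro exI[of _ t0]) auto
  qed
  then obtain t0 M where t0: "t0 > 0" "t0 \<le> T" and Mb: "\<forall>t\<in>{0<..<t0}. K t \<le> M" by auto
  show ?thesis
    apply (rule exI[of _ t0], rule conjI, rule t0)
    apply (rule exI[of _ K'], rule exI[of _ M])
    using Kpos Kd K'c Klim Mb t0 by auto
qed

theorem lemma3p1:
  fixes \<rho> \<theta> A :: real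
    and L L1 L2 Lf K :: "real \<Rightarrow> real"
  assumes rho: "\<rho> > 0" and theta: "\<theta> \<ge> 0"
    and L1: "\<forall>x\<ge>A. (L has_real_derivative L1 x) (at x within {A..})"
    and L2: "\<forall>x\<ge>A. (L1 has_real_derivative L2 x) (at x within {A..})"
    and L2c: "continuous_on {A..} L2"
    and Linf: "filterlim L at_top at_top"
    and L1NRV: "NRV (-1) L1"
    and Lf: "\<exists>B. nsv Lf B"
    and K: "NRV0 \<theta> K"
    and Kmono: "\<theta> = 0 \<longrightarrow> (\<exists>\<delta>>0. mono_on {0<..<\<delta>} K)"
  shows "\<exists>\<beta>>0. \<exists>\<Phi> \<Phi>1 \<Phi>2 D.
     (\<forall>t\<in>{0<..<\<beta>}.
        K integrable_on {0..t} \<and>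
        D \<le> \<Phi> t \<and>
        (\<lambda>y. sqrt (L1 y) / (y powr ((\<rho> + 1) / 2) * sqrt (Lf y))) integrable_on {\<Phi> t..} \<and>
        integral {\<Phi> t..} (\<lambda>y. sqrt (L1 y) / (y powr ((\<rho> + 1) / 2) * sqrt (Lf y)))
          = integral {0..t} K \<and>
        (\<forall>x\<ge>D. (\<lambda>y. sqrt (L1 y) / (y powr ((\<rho> + 1) / 2) * sqrt (Lf y))) integrable_on {x..} \<and>
           integral {x..} (\<lambda>y. sqrt (L1 y) / (y powr ((\<rho> + 1) / 2) * sqrt (Lf y)))
             = integral {0..t} K \<longrightarrow> x = \<Phi> t)) \<and>
     (\<forall>t\<in>{0<..<\<beta>}. (\<Phi> has_real_derivative \<Phi>1 t) (at t)) \<and>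
     (\<forall>t\<in>{0<..<\<beta>}. (\<Phi>1 has_real_derivative \<Phi>2 t) (at t)) \<and>
     continuous_on {0<..<\<beta>} \<Phi>2 \<and>
     filterlim \<Phi> at_top (at_right 0) \<and>
     NRV0 (-2 * (\<theta> + 1) / \<rho>) \<Phi> \<and>
     (\<forall>m::nat\<ge>1. ((\<lambda>t. logm m (\<Phi> t) / logm m (1 / t)) \<longlongrightarrow>
         (if m = 1 then 2 * (1 + \<theta>) / \<rho> else 1)) (at_right 0)) \<and>
     ((\<lambda>t. \<Phi> t * \<Phi>2 t / (\<Phi>1 t)\<^sup>2) \<longlongrightarrow> 1 + \<rho> / (2 * (\<theta> + 1))) (at_right 0) \<and>
     ((\<lambda>t. L (\<Phi> t) / L1 (\<Phi> t) * (\<Phi> t / (\<Phi>1 t)\<^sup>2)) \<longlongrightarrow> 0) (at_right 0)"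

proof -
  define g where "g = (\<lambda>y. sqrt (L1 y) / (y powr ((\<rho> + 1) / 2) * sqrt (Lf y)))"
  from L1NRV obtain l1 B1 where B1: "B1 > 0" and nl1: "nsv l1 B1"
    and L1eq: "\<forall>u\<ge>B1. L1 u = u powr (-1) * l1 u"
    unfolding NRV_def by (elim exE conjE)
  obtain l1' where l1pos: "\<forall>u\<ge>B1. l1 u > 0" and l1d: "\<forall>u>B1. DERIV l1 u :> l1' u"
    and l1c: "\<forall>u>B1. isCont l1' u"
    and l1lim: "((\<lambda>u. u * l1' u / l1 u) \<longlongrightarrow> 0) at_top" by (rule nsvE[OF nl1])
  from Lf obtain Bf where "nsv Lf Bf" by auto
  then obtain Lf' where Lfpos: "\<forall>u\<ge>Bf. Lf u > 0" and Lfd: "\<forall>u>Bf. DERIV Lf u :> Lf' u"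
    and Lfc: "\<forall>u>Bf. isCont Lf' u" and Lflim: "((\<lambda>u. u * Lf' u / Lf u) \<longlongrightarrow> 0) at_top" by (rule nsvE)
  from g_props[OF rho L2 L2c l1pos B1 l1d l1lim L1eq Lfpos Lfd Lfc Lflim g_def]
  obtain Y g' where Y: "Y > 0" "Y > A" "Y > B1" "Y > Bf" and gpos: "\<forall>y\<ge>Y. g y > 0"
    and gd: "\<forall>y\<ge>Y. DERIV g y :> g' y" and g'c: "\<forall>y\<ge>Y. isCont g' y"
    and glim: "((\<lambda>y. y * g' y / g y) \<longlongrightarrow> -1-\<rho>/2) at_top" by (elim exE conjE) blast
  define F where "F = (\<lambda>x. integral {x..} g)"
  have "\<rho>/2 > 0" using rho by simp
  from tail_integral[OF this Y(1) gpos gd glim]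
  obtain D where D: "D \<ge> Y" and gint: "\<forall>x\<ge>D. g integrable_on {x..}"
    and Fd: "\<forall>x\<ge>D. DERIV F x :> - g x" and Flim: "(F \<longlongrightarrow> 0) at_top"
    and Fpos: "\<forall>x\<ge>D. F x > 0" and Fratio0: "((\<lambda>x. F x / (x * g x)) \<longlongrightarrow> 1 / (\<rho>/2)) at_top"
    unfolding F_def by (elim exE conjE) blast
  from K_props[OF theta K Kmono] obtain t0 K' M where t0: "t0 > 0"
    and Kpos: "\<forall>t\<in>{0<..<t0}. K t > 0" and Kd: "\<forall>t\<in>{0<..<t0}. DERIV K t :> K' t"
    and K'c: "\<forall>t\<in>{0<..<t0}. isCont K' t" and Klim: "((\<lambda>t. t * K' t / K t) \<longlongrightarrow> \<theta>) (at_right 0)"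
    and Kbdd: "\<forall>t\<in>{0<..<t0}. K t \<le> M" by (elim exE conjE) blast
  define G where "G = (\<lambda>t. integral {0..t} K)"
  from head_integral[OF theta t0 Kpos Kd Klim Kbdd]
  have Kint: "\<forall>t\<in>{0<..<t0}. K integrable_on {0..t}" and Gd: "\<forall>t\<in>{0<..<t0}. DERIV G t :> K t"
    and Glim: "(G \<longlongrightarrow> 0) (at_right 0)" and Gpos: "\<forall>t\<in>{0<..<t0}. G t > 0"
    and Gratio: "((\<lambda>t. G t / (t * K t)) \<longlongrightarrow> 1/(\<theta>+1)) (at_right 0)"
    unfolding G_def by blast+
  have gposD: "\<forall>x\<ge>D. g x > 0" using gpos D by auto
  from compose_inverse[OF t0 Fd gposD Flim Fpos Gd Glim Gpos]
  obtain \<beta> \<Phi> where \<beta>: "0 < \<beta>" "\<beta> \<le> t0"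
    and P: "\<forall>t\<in>{0<..<\<beta>}. \<Phi> t > D \<and> F (\<Phi> t) = G t \<and> (\<forall>x\<ge>D. F x = G t \<longrightarrow> x = \<Phi> t)
          \<and> DERIV \<Phi> t :> - K t / g (\<Phi> t)"
    and Philim: "filterlim \<Phi> at_top (at_right 0)" by (elim exE conjE) blast
  define \<Phi>1 where "\<Phi>1 t = - K t / g (\<Phi> t)" for t
  define \<Phi>2 where "\<Phi>2 t = - ((K' t * g (\<Phi> t) - K t * (g' (\<Phi> t) * \<Phi>1 t)) / (g (\<Phi> t) * g (\<Phi> t)))" for t
  have tin: "t \<in> {0<..<t0}" if "t \<in> {0<..<\<beta>}" for t using that \<beta> by auto
  have PhiD: "\<Phi> t > D" "\<Phi> t \<ge> Y" "\<Phi> t > 0" "F (\<Phi> t) = G t" if "t \<in> {0<..<\<beta>}" for t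
  proof -
    show "\<Phi> t > D" "F (\<Phi> t) = G t" using P that by auto
    thus "\<Phi> t \<ge> Y" "\<Phi> t > 0" using D Y by auto
  qed
  have Phid: "DERIV \<Phi> t :> \<Phi>1 t" if "t \<in> {0<..<\<beta>}" for t using P that by (simp add: \<Phi>1_def)
  have gPhi: "g (\<Phi> t) > 0" if "t \<in> {0<..<\<beta>}" for t using gpos PhiD[OF that] by auto
  have gPhid: "DERIV (\<lambda>t. g (\<Phi> t)) t :> g' (\<Phi> t) * \<Phi>1 t" if "t \<in> {0<..<\<beta>}" for t
    by (rule DERIV_chain2[OF _ Phid[OF that]]) (use gd PhiD[OF that] in auto)
  have Phi1d: "DERIV \<Phi>1 t :> \<Phi>2 t" if t: "t \<in> {0<..<\<beta>}" for t
  proof -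
    have a: "DERIV K t :> K' t" using Kd tin[OF t] by blast
    have "DERIV (\<lambda>t. K t / g (\<Phi> t)) t :> (K' t * g (\<Phi> t) - K t * (g' (\<Phi> t) * \<Phi>1 t)) / (g (\<Phi> t) * g (\<Phi> t))"
      by (rule DERIV_divide[OF a gPhid[OF t]]) (use gPhi[OF t] in simp)
    from DERIV_minus[OF this]
    have b: "DERIV (\<lambda>x. - (K x / g (\<Phi> x))) t :> \<Phi>2 t" unfolding \<Phi>2_def .
    have e: "(\<lambda>x. - (K x / g (\<Phi> x))) = \<Phi>1" by (rule ext) (simp add: \<Phi>1_def)
    show ?thesis using b unfolding e .
  qed
  have Phi2c: "continuous_on {0<..<\<beta>} \<Phi>2"
  proof (intro continuous_at_imp_continuous_on ballI)
    fix t assume t: "t \<in> {0<..<\<beta>}"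
    have c1: "isCont K' t" using K'c tin[OF t] by auto
    have c2: "isCont K t" using Kd tin[OF t] DERIV_isCont by blast
    have c3: "isCont (\<lambda>t. g (\<Phi> t)) t" using gPhid[OF t] DERIV_isCont by blast
    have c4: "isCont \<Phi>1 t" using Phi1d[OF t] DERIV_isCont by blast
    have "isCont \<Phi> t" using Phid[OF t] DERIV_isCont by blast
    hence c5: "isCont (\<lambda>t. g' (\<Phi> t)) t" using g'c PhiD[OF t] isCont_o2 by blast
    show "isCont \<Phi>2 t" unfolding \<Phi>2_def[abs_def] using c1 c2 c3 c4 c5 gPhi[OF t]
      by (intro continuous_intros) auto
  qed
  have ev: "eventually (\<lambda>t. t \<in> {0<..<\<beta>}) (at_right 0)"
    using \<beta> by (auto simp: eventually_at_right_field intro!: exI[of _ \<beta>])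
  have RF: "((\<lambda>t. F (\<Phi> t) / (\<Phi> t * g (\<Phi> t))) \<longlongrightarrow> 2 / \<rho>) (at_right 0)"
    using filterlim_compose[OF Fratio0 Philim] by simp
  have Rg: "((\<lambda>t. \<Phi> t * g' (\<Phi> t) / g (\<Phi> t)) \<longlongrightarrow> -1-\<rho>/2) (at_right 0)"
    using filterlim_compose[OF glim Philim] by simp
  define \<alpha> where "\<alpha> = 2 * (1 + \<theta>) / \<rho>"
  have \<alpha>: "\<alpha> > 0" using rho theta by (simp add: \<alpha>_def)
  have R1: "((\<lambda>t. t * \<Phi>1 t / \<Phi> t) \<longlongrightarrow> - \<alpha>) (at_right 0)"
  proof -
    have "((\<lambda>t. - (F (\<Phi> t) / (\<Phi> t * g (\<Phi> t))) / (G t / (t * K t))) \<longlongrightarrow> - (2 / \<rho>) / (1 / (\<theta> + 1))) (at_right 0)"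
      using theta by (intro tendsto_intros RF Gratio) auto
    moreover have "- (2 / \<rho>) / (1 / (\<theta> + 1)) = - \<alpha>" by (simp add: \<alpha>_def field_simps)
    ultimately have "((\<lambda>t. - (F (\<Phi> t) / (\<Phi> t * g (\<Phi> t))) / (G t / (t * K t))) \<longlongrightarrow> - \<alpha>) (at_right 0)" by simp
    thus ?thesis
    proof (rule Lim_transform_eventually)
      show "eventually (\<lambda>t. - (F (\<Phi> t) / (\<Phi> t * g (\<Phi> t))) / (G t / (t * K t)) = t * \<Phi>1 t / \<Phi> t) (at_right 0)"
        using ev
      proof eventually_elim
        case (elim t)
        have "K t > 0" "G t > 0" using Kpos Gpos tin[OF elim] by auto
        moreover have "t > 0" using elim by simp
        ultimately show ?case using PhiD[OF elim] gPhi[OF elim] by (simp add: \<Phi>1_def field_simps)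
      qed
    qed
  qed
  have evtop: "eventually (\<lambda>u. 1/u \<in> {0<..<\<beta>} \<and> u > 0) at_top"
    using ev eventually_gt_at_top[of 0] unfolding eventually_at_right_to_top
    by eventually_elim (simp add: inverse_eq_divide)
  have R1top: "((\<lambda>u. (1/u) * \<Phi>1 (1/u) / \<Phi> (1/u)) \<longlongrightarrow> - \<alpha>) at_top"
    using R1 unfolding filterlim_at_right_to_top by (simp add: inverse_eq_divide)
  have d1: "DERIV (\<lambda>u. 1/u) u :> - 1 / u^2" if "u > 0" for u :: real using that
    by (auto intro!: derivative_eq_intros simp: power2_eq_square field_simps)
  have LnRtop: "((\<lambda>u. ln (\<Phi> (1/u)) / ln u) \<longlongrightarrow> \<alpha>) at_top"
  proof (rule log_ratio_limit[where f' = "\<lambda>u. \<Phi>1 (1/u) * (- 1 / u^2)"])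
    show "eventually (\<lambda>u. \<Phi> (1/u) > 0) at_top" using evtop by eventually_elim (use PhiD in auto)
    show "eventually (\<lambda>u. DERIV (\<lambda>u. \<Phi> (1/u)) u :> \<Phi>1 (1/u) * (- 1 / u^2)) at_top"
      using evtop by eventually_elim (rule DERIV_chain2[OF Phid d1], auto)
    have "((\<lambda>u. - ((1/u) * \<Phi>1 (1/u) / \<Phi> (1/u))) \<longlongrightarrow> - (- \<alpha>)) at_top"
      by (intro tendsto_minus R1top)
    hence "((\<lambda>u. - ((1/u) * \<Phi>1 (1/u) / \<Phi> (1/u))) \<longlongrightarrow> \<alpha>) at_top" by simp
    thus "((\<lambda>u. u * (\<Phi>1 (1/u) * (- 1 / u^2)) / \<Phi> (1/u)) \<longlongrightarrow> \<alpha>) at_top"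
    proof (rule Lim_transform_eventually)
      show "eventually (\<lambda>u. - ((1/u) * \<Phi>1 (1/u) / \<Phi> (1/u)) = u * (\<Phi>1 (1/u) * (- 1 / u^2)) / \<Phi> (1/u)) at_top"
        using evtop by eventually_elim (simp add: power2_eq_square field_simps)
    qed
  qed
  have LnR: "((\<lambda>t. ln (\<Phi> t) / ln (1/t)) \<longlongrightarrow> \<alpha>) (at_right 0)"
    using LnRtop unfolding filterlim_at_top_to_right by (simp add: inverse_eq_divide)
  have inv0: "filterlim (\<lambda>t::real. 1/t) at_top (at_right 0)"
    using filterlim_inverse_at_top_right by (simp add: divide_inverse)
  have LOGS: "\<forall>m::nat\<ge>1. ((\<lambda>t. logm m (\<Phi> t) / logm m (1 / t)) \<longlongrightarrow>
         (if m = 1 then 2 * (1 + \<theta>) / \<rho> else 1)) (at_right 0)"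
    using iterated_logs[OF inv0 LnR \<alpha>] unfolding \<alpha>_def by blast
  have NRVPhi: "NRV0 (-2 * (\<theta> + 1) / \<rho>) \<Phi>"
  proof -
    have aeq: "- (-2 * (\<theta> + 1) / \<rho>) = \<alpha>" unfolding \<alpha>_def minus_divide_left by simp
    define B where "B = 2 / \<beta>"
    have B: "B > 0" using \<beta> by (simp add: B_def)
    have Bin: "1/u \<in> {0<..<\<beta>}" "u > 0" if "u \<ge> B" for u
    proof -
      show "u > 0" using B that by simp
      have "1/u \<le> 1/B" using B that by (intro divide_left_mono) auto
      also have "1/B < \<beta>" using \<beta> by (simp add: B_def)
      finally show "1/u \<in> {0<..<\<beta>}" using \<open>u > 0\<close> by simp
    qed
    define Lh where "Lh u = \<Phi> (1/u) * u powr (-\<alpha>)" for u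
    define Lh' where "Lh' u = \<Phi>1 (1/u) * (- 1 / u^2) * u powr (-\<alpha>) + \<Phi> (1/u) * (-\<alpha> * (u powr (-\<alpha>) / u))" for u
    have Lhpos: "Lh u > 0" if "u \<ge> B" for u using PhiD(3)[OF Bin(1)[OF that]] Bin(2)[OF that] by (simp add: Lh_def)
    have Lhd: "DERIV Lh u :> Lh' u" if "u \<ge> B" for u
    proof -
      have u0: "u > 0" using Bin[OF that] by simp
      have a: "DERIV (\<lambda>u. \<Phi> (1/u)) u :> \<Phi>1 (1/u) * (- 1 / u^2)"
        by (rule DERIV_chain2[OF Phid[OF Bin(1)[OF that]] d1[OF u0]])
      have b: "DERIV (\<lambda>u. u powr (-\<alpha>)) u :> -\<alpha> * u powr (-\<alpha> - 1)"
        by (rule has_real_derivative_powr[OF u0])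
      have "u powr (-\<alpha> - 1) = u powr (-\<alpha>) / u" using u0 by (simp add: powr_diff)
      hence b': "DERIV (\<lambda>u. u powr (-\<alpha>)) u :> -\<alpha> * (u powr (-\<alpha>) / u)" using b by simp
      from DERIV_mult'[OF a b']
      have "DERIV (\<lambda>u. \<Phi> (1/u) * u powr (-\<alpha>)) u :> \<Phi> (1/u) * (-\<alpha> * (u powr (-\<alpha>) / u)) + \<Phi>1 (1/u) * (- 1 / u^2) * u powr (-\<alpha>)" .
      thus ?thesis unfolding Lh_def[abs_def] Lh'_def by (simp add: add.commute)
    qed
    have Lh'c: "isCont Lh' u" if "u \<ge> B" for u
    proof -
      have u0: "u > 0" using Bin[OF that] by simp
      have c0: "isCont (\<lambda>u. 1/u) u" using u0 by (intro continuous_intros) auto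
      have "isCont \<Phi>1 (1/u)" using Phi1d[OF Bin(1)[OF that]] DERIV_isCont by blast
      hence c1: "isCont (\<lambda>u. \<Phi>1 (1/u)) u" using c0 isCont_o2 by blast
      have "isCont \<Phi> (1/u)" using Phid[OF Bin(1)[OF that]] DERIV_isCont by blast
      hence c2: "isCont (\<lambda>u. \<Phi> (1/u)) u" using c0 isCont_o2 by blast
      show ?thesis unfolding Lh'_def[abs_def] using c1 c2 u0 by (intro continuous_intros) auto
    qed
    have Lhlim: "((\<lambda>u. u * Lh' u / Lh u) \<longlongrightarrow> 0) at_top"
    proof -
      have "((\<lambda>u. - ((1/u) * \<Phi>1 (1/u) / \<Phi> (1/u)) - \<alpha>) \<longlongrightarrow> - (- \<alpha>) - \<alpha>) at_top"
        by (intro tendsto_intros R1top)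
      hence "((\<lambda>u. - ((1/u) * \<Phi>1 (1/u) / \<Phi> (1/u)) - \<alpha>) \<longlongrightarrow> 0) at_top" by simp
      thus ?thesis
      proof (rule Lim_transform_eventually)
        show "eventually (\<lambda>u. - ((1/u) * \<Phi>1 (1/u) / \<Phi> (1/u)) - \<alpha> = u * Lh' u / Lh u) at_top"
          using eventually_ge_at_top[of B]
        proof eventually_elim
          case (elim u)
          have u0: "u > 0" using Bin[OF elim] by simp
          have p: "\<Phi> (1/u) > 0" using PhiD(3)[OF Bin(1)[OF elim]] .
          have q: "u powr (-\<alpha>) > 0" using u0 by simp
          show ?case unfolding Lh_def Lh'_def using u0 p q
            by (simp add: field_simps power2_eq_square)
        qed
      qed
    qed
    have "nsv Lh B"
      unfolding nsv_def
    proof (intro conjI allI impI exI[of _ Lh'])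
      show "Lh u > 0" if "u \<ge> B" for u using Lhpos that by simp
      show "(Lh has_real_derivative Lh' u) (at u within {B..})" if "u \<ge> B" for u
        using Lhd[OF that] by (rule has_field_derivative_at_within)
      show "continuous_on {B..} Lh'" using Lh'c by (intro continuous_at_imp_continuous_on) auto
      show "((\<lambda>u. u * Lh' u / Lh u) \<longlongrightarrow> 0) at_top" by (rule Lhlim)
    qed
    moreover have "\<Phi> (1/u) = u powr \<alpha> * Lh u" if "u \<ge> B" for u
    proof -
      have u0: "u > 0" using Bin[OF that] by simp
      have "u powr \<alpha> * u powr (-\<alpha>) = 1" using u0 by (simp add: powr_add[symmetric])
      thus ?thesis unfolding Lh_def by (metis mult.assoc mult.commute mult.right_neutral)
    qed
    ultimately show ?thesis unfolding NRV0_def NRV_def aeq using B by blast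
  qed
  have SEC: "((\<lambda>t. \<Phi> t * \<Phi>2 t / (\<Phi>1 t)\<^sup>2) \<longlongrightarrow> 1 + \<rho> / (2 * (\<theta> + 1))) (at_right 0)"
  proof -
    have X: "((\<lambda>t. - (t * K' t / K t) * inverse (F (\<Phi> t) / (\<Phi> t * g (\<Phi> t))) * (G t / (t * K t))
              - \<Phi> t * g' (\<Phi> t) / g (\<Phi> t))
          \<longlongrightarrow> - \<theta> * inverse (2 / \<rho>) * (1 / (\<theta> + 1)) - (-1-\<rho>/2)) (at_right 0)"
      using rho by (intro tendsto_intros Klim RF Gratio Rg) auto
    have E: "- \<theta> * inverse (2 / \<rho>) * (1 / (\<theta> + 1)) - (-1-\<rho>/2) = 1 + \<rho> / (2 * (\<theta> + 1))"
      using theta rho by (simp add: field_simps)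
    have lim: "((\<lambda>t. - (t * K' t / K t) * inverse (F (\<Phi> t) / (\<Phi> t * g (\<Phi> t))) * (G t / (t * K t))
              - \<Phi> t * g' (\<Phi> t) / g (\<Phi> t)) \<longlongrightarrow> 1 + \<rho> / (2 * (\<theta> + 1))) (at_right 0)"
      using X unfolding E .
    show ?thesis
    proof (rule Lim_transform_eventually[OF lim])
      show "eventually (\<lambda>t. - (t * K' t / K t) * inverse (F (\<Phi> t) / (\<Phi> t * g (\<Phi> t))) * (G t / (t * K t))
              - \<Phi> t * g' (\<Phi> t) / g (\<Phi> t) = \<Phi> t * \<Phi>2 t / (\<Phi>1 t)\<^sup>2) (at_right 0)"
        using ev
      proof eventually_elim
        case (elim t)
        have k: "K t > 0" "G t > 0" using Kpos Gpos tin[OF elim] by auto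
        have t: "t > 0" using elim by simp
        have p: "\<Phi> t > 0" "F (\<Phi> t) = G t" using PhiD[OF elim] by auto
        have gp: "g (\<Phi> t) > 0" using gPhi[OF elim] .
        show ?case unfolding p(2) \<Phi>2_def \<Phi>1_def using k t p(1) gp
          by (simp add: field_simps power2_eq_square)
      qed
    qed
  qed
  have LAST: "((\<lambda>t. L (\<Phi> t) / L1 (\<Phi> t) * (\<Phi> t / (\<Phi>1 t)\<^sup>2)) \<longlongrightarrow> 0) (at_right 0)"
  proof -
    define \<delta> where "\<delta> = 1 / (\<alpha> + 1)"
    have \<delta>: "\<delta> > 0" using \<alpha> by (simp add: \<delta>_def)
    have Ld: "eventually (\<lambda>y. DERIV L y :> l1 y / y) at_top"
      using eventually_gt_at_top[of Y]
    proof eventually_elim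
      case (elim y)
      have "DERIV L y :> L1 y" using L1 elim Y within_to_at[of L "L1 y" y A] by auto
      moreover have "L1 y = l1 y / y" using L1eq elim Y by (simp add: powr_minus divide_inverse mult.commute)
      ultimately show ?case by simp
    qed
    have hlim: "((\<lambda>y. L y / l1 y * y powr (-2*\<delta>)) \<longlongrightarrow> 0) at_top"
    proof (rule L_growth[OF _ _ l1lim Ld \<delta>])
      show "eventually (\<lambda>y. l1 y > 0) at_top" using eventually_ge_at_top[of B1] by eventually_elim (use l1pos in auto)
      show "eventually (\<lambda>y. DERIV l1 y :> l1' y) at_top" using eventually_gt_at_top[of B1] by eventually_elim (use l1d in auto)
    qed
    have hPhi: "((\<lambda>t. L (\<Phi> t) / l1 (\<Phi> t) * \<Phi> t powr (-2*\<delta>)) \<longlongrightarrow> 0) (at_right 0)"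
      using filterlim_compose[OF hlim Philim] by simp
    have LPhi: "filterlim (\<lambda>t. L (\<Phi> t)) at_top (at_right 0)" by (rule filterlim_compose[OF Linf Philim])
    have evL: "eventually (\<lambda>t. 0 \<le> L (\<Phi> t)) (at_right 0)" using LPhi unfolding filterlim_at_top by blast
    have evR: "eventually (\<lambda>t. ln (\<Phi> t) / ln (1/t) < \<alpha> + 1) (at_right 0)"
      using LnR by (intro order_tendstoD) auto
    have ev1: "eventually (\<lambda>t. t < 1) (at_right (0::real))"
      by (auto simp: eventually_at_right_field intro!: exI[of _ 1])
    have S: "((\<lambda>t. t^2 * L (\<Phi> t) / l1 (\<Phi> t)) \<longlongrightarrow> 0) (at_right 0)"
    proof (rule tendsto_sandwich[where f = "\<lambda>_. 0" and h = "\<lambda>t. L (\<Phi> t) / l1 (\<Phi> t) * \<Phi> t powr (-2*\<delta>)"])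
      show "eventually (\<lambda>t. 0 \<le> t^2 * L (\<Phi> t) / l1 (\<Phi> t)) (at_right 0)"
        using ev evL
      proof eventually_elim
        case (elim t)
        have "l1 (\<Phi> t) > 0" using l1pos PhiD(2)[OF elim(1)] Y by auto
        thus ?case using elim by auto
      qed
      show "eventually (\<lambda>t. t^2 * L (\<Phi> t) / l1 (\<Phi> t) \<le> L (\<Phi> t) / l1 (\<Phi> t) * \<Phi> t powr (-2*\<delta>)) (at_right 0)"
        using ev evL evR ev1
      proof eventually_elim
        case (elim t)
        have l1p: "l1 (\<Phi> t) > 0" using l1pos PhiD(2)[OF elim(1)] Y by auto
        have t0: "t > 0" using elim by simp
        have p: "\<Phi> t > 0" using PhiD(3)[OF elim(1)] .
        have lt: "ln (1/t) > 0" using elim t0 by simp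
        have "ln (\<Phi> t) < (\<alpha> + 1) * ln (1/t)" using elim(3) lt by (simp add: field_simps)
        hence "\<delta> * ln (\<Phi> t) < ln (1/t)" using \<alpha> by (simp add: \<delta>_def field_simps)
        hence "ln t < - \<delta> * ln (\<Phi> t)" using t0 by (simp add: ln_div)
        hence "exp (ln t) < exp (- \<delta> * ln (\<Phi> t))" by simp
        hence tle: "t < \<Phi> t powr (-\<delta>)" using t0 p by (simp add: powr_def)
        have "t^2 \<le> (\<Phi> t powr (-\<delta>))^2" using tle t0 by (intro power_mono) auto
        also have "(\<Phi> t powr (-\<delta>))^2 = \<Phi> t powr (-2*\<delta>)"
          using p by (simp add: powr_realpow[symmetric] powr_powr mult.commute)
        finally have t2: "t^2 \<le> \<Phi> t powr (-2*\<delta>)" .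
        have q: "L (\<Phi> t) / l1 (\<Phi> t) \<ge> 0" using elim(2) l1p by simp
        have "t^2 * L (\<Phi> t) / l1 (\<Phi> t) = (L (\<Phi> t) / l1 (\<Phi> t)) * t^2" by simp
        also have "\<dots> \<le> (L (\<Phi> t) / l1 (\<Phi> t)) * \<Phi> t powr (-2*\<delta>)" using t2 q by (rule mult_left_mono)
        finally show ?case .
      qed
    qed (insert hPhi, auto)
    have X: "((\<lambda>t. (t^2 * L (\<Phi> t) / l1 (\<Phi> t)) * (inverse (F (\<Phi> t) / (\<Phi> t * g (\<Phi> t))))^2 * (G t / (t * K t))^2)
        \<longlongrightarrow> 0 * (inverse (2 / \<rho>))^2 * (1 / (\<theta> + 1))^2) (at_right 0)"
      using rho by (intro tendsto_intros S RF Gratio) auto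
    hence X': "((\<lambda>t. (t^2 * L (\<Phi> t) / l1 (\<Phi> t)) * (inverse (F (\<Phi> t) / (\<Phi> t * g (\<Phi> t))))^2 * (G t / (t * K t))^2)
        \<longlongrightarrow> 0) (at_right 0)" by simp
    show ?thesis
    proof (rule Lim_transform_eventually[OF X'])
      show "eventually (\<lambda>t. (t^2 * L (\<Phi> t) / l1 (\<Phi> t)) * (inverse (F (\<Phi> t) / (\<Phi> t * g (\<Phi> t))))^2 * (G t / (t * K t))^2
         = L (\<Phi> t) / L1 (\<Phi> t) * (\<Phi> t / (\<Phi>1 t)\<^sup>2)) (at_right 0)"
        using ev
      proof eventually_elim
        case (elim t)
        have k: "K t > 0" "G t > 0" using Kpos Gpos tin[OF elim] by auto
        have t: "t > 0" using elim by simp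
        have p: "\<Phi> t > 0" "F (\<Phi> t) = G t" using PhiD[OF elim] by auto
        have gp: "g (\<Phi> t) > 0" using gPhi[OF elim] .
        have l1p: "l1 (\<Phi> t) > 0" using l1pos PhiD(2)[OF elim] Y by auto
        have L1e: "L1 (\<Phi> t) = l1 (\<Phi> t) / \<Phi> t" using L1eq PhiD(2)[OF elim] Y
          by (simp add: powr_minus divide_inverse mult.commute)
        show ?case unfolding p(2) L1e \<Phi>1_def using k t p(1) gp l1p
          by (simp add: field_simps power2_eq_square)
      qed
    qed
  qed
  have main1: "\<forall>t\<in>{0<..<\<beta>}. K integrable_on {0..t} \<and> D \<le> \<Phi> t \<and> g integrable_on {\<Phi> t..} \<and>
      integral {\<Phi> t..} g = integral {0..t} K \<and>
      (\<forall>x\<ge>D. g integrable_on {x..} \<and> integral {x..} g = integral {0..t} K \<longrightarrow> x = \<Phi> t)"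
  proof
    fix t assume t: "t \<in> {0<..<\<beta>}"
    have a: "K integrable_on {0..t}" using Kint tin[OF t] by blast
    have b: "D \<le> \<Phi> t" using PhiD(1)[OF t] by simp
    have c: "g integrable_on {\<Phi> t..}" using gint b by blast
    have d: "integral {\<Phi> t..} g = integral {0..t} K" using PhiD(4)[OF t] by (simp add: F_def G_def)
    have e: "\<forall>x\<ge>D. g integrable_on {x..} \<and> integral {x..} g = integral {0..t} K \<longrightarrow> x = \<Phi> t"
      using P t by (simp add: F_def G_def)
    show "K integrable_on {0..t} \<and> D \<le> \<Phi> t \<and> g integrable_on {\<Phi> t..} \<and>
      integral {\<Phi> t..} g = integral {0..t} K \<and>
      (\<forall>x\<ge>D. g integrable_on {x..} \<and> integral {x..} g = integral {0..t} K \<longrightarrow> x = \<Phi> t)"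
      using a b c d e by blast
  qed
  have D1: "\<forall>t\<in>{0<..<\<beta>}. (\<Phi> has_real_derivative \<Phi>1 t) (at t)" using Phid by blast
  have D2: "\<forall>t\<in>{0<..<\<beta>}. (\<Phi>1 has_real_derivative \<Phi>2 t) (at t)" using Phi1d by blast
  show ?thesis
    unfolding g_def[symmetric]
    apply (rule exI[of _ \<beta>], rule conjI, rule \<beta>(1))
    apply (rule exI[of _ \<Phi>], rule exI[of _ \<Phi>1], rule exI[of _ \<Phi>2], rule exI[of _ D])
    apply (intro conjI)
    apply (rule main1)
    apply (rule D1)
    apply (rule D2)
    apply (rule Phi2c)
    apply (rule Philim)
    apply (rule NRVPhi)
    apply (rule LOGS)
    apply (rule SEC)
    apply (rule LAST)
    done
qed

end
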